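(* Let $G(x,y)=g(\rho(x,y))$ be the Green's function (fundamental solution) of the Paneitz operator $P_2$ on $\mathbb{H}^3$. Then $g(\rho)>0$ for all $\rho>0$, and $g$ is strictly monotonically decreasing in the geodesic distance $\rho\in(0,\infty)$.
   Context: $\mathbb{H}^3$ is 3-dimensional hyperbolic space with geodesic distance $\rho$ and Laplace–Beltrami operator $\Delta_{\mathbb{H}}$. $P_1=-\Delta_{\mathbb{H}}-\frac34$ and $P_2=P_1(P_1+2)$. The Green's function $G=P_2^{-1}$ is the (decaying) fundamental solution of $P_2$, which depends only on $\rho(x,y)$. *)

theory Defs
  imports "HOL-Analysis.Analysis"
begin

text \<open>For a function of the geodesic distance r from a fixed point, the
  Laplace-Beltrami operator acts as f'' + 2 coth(r) f', and the Riemannian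
  volume element is 4 pi sinh(r)^2 dr (times the sphere measure, already included).\<close>

definition hyp_radial_lap :: "(real \<Rightarrow> real) \<Rightarrow> real \<Rightarrow> real" where
  "hyp_radial_lap f r = deriv (deriv f) r + 2 * (cosh r / sinh r) * deriv f r"

definition P1_rad :: "(real \<Rightarrow> real) \<Rightarrow> real \<Rightarrow> real" where
  "P1_rad f r = - hyp_radial_lap f r - 3/4 * f r"

definition P2_rad :: "(real \<Rightarrow> real) \<Rightarrow> real \<Rightarrow> real" where
  "P2_rad f = P1_rad (\<lambda>r. P1_rad f r + 2 * f r)"

text \<open>Radial test functions: smooth, compactly supported functions on the
  hyperbolic space depending only on the distance to the base point, i.e.
  even smooth compactly supported functions of r.\<close>
definition radial_test :: "(real \<Rightarrow> real) \<Rightarrow> bool" where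
  "radial_test \<psi> \<longleftrightarrow>
     (\<forall>n x. ((deriv ^^ n) \<psi>) differentiable (at x)) \<and>
     (\<forall>r. \<psi> (- r) = \<psi> r) \<and>
     (\<exists>R. \<forall>r. R < \<bar>r\<bar> \<longrightarrow> \<psi> r = 0)"

text \<open>g is the radial profile of the Green's function G = P2^{-1}:
  G(x,y) = g(rho(x,y)) is continuous off the diagonal, solves
  P2 G(x,.) = delta_x in the sense of distributions (tested against radial
  test functions, which suffices since G(x,.) is radial about x), and is the
  decaying (L^2 at infinity) solution, i.e. the kernel of the bounded inverse.\<close>
definition is_P2_green_profile :: "(real \<Rightarrow> real) \<Rightarrow> bool" where
  "is_P2_green_profile g \<longleftrightarrow>
     continuous_on {0<..} g \<and>
     (\<forall>\<psi>. radial_test \<psi> \<longrightarrow>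
        (\<lambda>r. g r * P2_rad \<psi> r * (4 * pi * (sinh r)\<^sup>2)) absolutely_integrable_on {0<..} \<and>
        integral {0<..} (\<lambda>r. g r * P2_rad \<psi> r * (4 * pi * (sinh r)\<^sup>2)) = \<psi> 0) \<and>
     (\<lambda>r. (g r)\<^sup>2 * (sinh r)\<^sup>2) integrable_on {1..}"

end

theory Submission
  imports Defs "HOL-Computational_Algebra.Polynomial"
begin

definition smk :: "real set \<Rightarrow> nat \<Rightarrow> (real \<Rightarrow> real) \<Rightarrow> bool" where
  "smk S n f \<longleftrightarrow> (\<forall>k\<le>n. \<forall>x\<in>S. (deriv ^^ k) f differentiable (at x))"

definition smo :: "real set \<Rightarrow> (real \<Rightarrow> real) \<Rightarrow> bool" where
  "smo S f \<longleftrightarrow> (\<forall>n. smk S n f)"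

lemma loc_eq:
  assumes "open S" "\<And>y. y \<in> S \<Longrightarrow> f y = g y" "x \<in> S"
  shows "(deriv ^^ n) f x = (deriv ^^ n) g x"
proof -
  have "eventually (\<lambda>y. f y = g y) (nhds x)"
    using assms eventually_nhds by blast
  thus ?thesis by (rule higher_deriv_cong_ev) simp
qed

lemma loc_diff:
  fixes f g :: "real \<Rightarrow> real"
  assumes "open S" "\<And>y. y \<in> S \<Longrightarrow> f y = g y" "x \<in> S" "f differentiable (at x)"
  shows "g differentiable (at x)"
proof -
  have ev: "eventually (\<lambda>y. f y = g y) (nhds x)"
    using assms eventually_nhds by blast
  from assms(4) have "(f has_real_derivative deriv f x) (at x)"
    using DERIV_deriv_iff_real_differentiable by blast
  hence "(g has_real_derivative deriv f x) (at x)"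
    using DERIV_cong_ev[OF refl ev refl] by simp
  thus ?thesis using real_differentiable_def by blast
qed

lemma ev_open: assumes "open S" "x \<in> S" "\<And>y. y \<in> S \<Longrightarrow> P y" shows "eventually P (nhds x)"
  using assms eventually_nhds by blast

lemma smk_mono: "smk S n f \<Longrightarrow> m \<le> n \<Longrightarrow> smk S m f"
  unfolding smk_def by auto

lemma smk_deriv: "smk S (Suc n) f \<Longrightarrow> smk S n (deriv f)"
  unfolding smk_def
  by (metis Suc_le_mono funpow_Suc_right o_apply)

lemma smo_deriv: "smo S f \<Longrightarrow> smo S (deriv f)"
  unfolding smo_def using smk_deriv by blast

lemma smk_0: "smk S n f \<Longrightarrow> x \<in> S \<Longrightarrow> f differentiable (at x)"
  unfolding smk_def by (metis funpow_0 le0)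

lemma smk_D: "smk S n f \<Longrightarrow> k \<le> n \<Longrightarrow> x \<in> S \<Longrightarrow> ((deriv ^^ k) f has_real_derivative (deriv ^^ Suc k) f x) (at x)"
  unfolding smk_def using DERIV_deriv_iff_real_differentiable by fastforce

lemma sum_eq:
  assumes "open S" "smk S n f" "smk S n g" "k \<le> Suc n" "x \<in> S"
  shows "(deriv ^^ k) (\<lambda>y. a * f y + b * g y) x = a * (deriv ^^ k) f x + b * (deriv ^^ k) g x"
  using assms(4,5)
proof (induction k arbitrary: x)
  case 0 thus ?case by simp
next
  case (Suc k)
  have IH: "\<And>y. y \<in> S \<Longrightarrow> (deriv ^^ k) (\<lambda>y. a * f y + b * g y) y = a * (deriv ^^ k) f y + b * (deriv ^^ k) g y"
    using Suc by auto
  have "(deriv ^^ Suc k) (\<lambda>y. a * f y + b * g y) x = deriv ((deriv ^^ k) (\<lambda>y. a * f y + b * g y)) x"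
    by simp
  also have "\<dots> = deriv (\<lambda>y. a * (deriv ^^ k) f y + b * (deriv ^^ k) g y) x"
    by (rule deriv_cong_ev[OF ev_open[OF assms(1) Suc.prems(2)] refl]) (rule IH)
  also have "\<dots> = a * (deriv ^^ Suc k) f x + b * (deriv ^^ Suc k) g x"
  proof -
    have "((\<lambda>y. a * (deriv ^^ k) f y + b * (deriv ^^ k) g y) has_real_derivative
        a * (deriv ^^ Suc k) f x + b * (deriv ^^ Suc k) g x) (at x)"
      using smk_D[OF assms(2), of k x] smk_D[OF assms(3), of k x] Suc.prems
      by (auto intro!: derivative_eq_intros)
    thus ?thesis using DERIV_imp_deriv by blast
  qed
  finally show ?case .
qed

lemma smk_lin:
  assumes "open S" "smk S n f" "smk S n g"
  shows "smk S n (\<lambda>y. a * f y + b * g y)"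
  unfolding smk_def
proof (intro allI impI ballI)
  fix k x assume k: "k \<le> n" and x: "x \<in> S"
  have e: "\<And>y. y \<in> S \<Longrightarrow> a * (deriv ^^ k) f y + b * (deriv ^^ k) g y = (deriv ^^ k) (\<lambda>y. a * f y + b * g y) y"
    using sum_eq[OF assms] k by simp
  have "(\<lambda>y. a * (deriv ^^ k) f y + b * (deriv ^^ k) g y) differentiable (at x)"
  proof -
    have "((\<lambda>y. a * (deriv ^^ k) f y + b * (deriv ^^ k) g y) has_real_derivative
        a * (deriv ^^ Suc k) f x + b * (deriv ^^ Suc k) g x) (at x)"
      using smk_D[OF assms(2) k x] smk_D[OF assms(3) k x]
      by (auto intro!: derivative_eq_intros)
    thus ?thesis using real_differentiable_def by blast
  qed
  thus "(deriv ^^ k) (\<lambda>y. a * f y + b * g y) differentiable (at x)"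
    using loc_diff[of S "\<lambda>y. a * (deriv ^^ k) f y + b * (deriv ^^ k) g y"
        "(deriv ^^ k) (\<lambda>y. a * f y + b * g y)" x] e assms(1) x by blast
qed

lemma smk_mult:
  assumes "open S" "smk S n f" "smk S n g"
  shows "smk S n (\<lambda>y. f y * g y)"
  using assms(2,3)
proof (induction n arbitrary: f g)
  case 0 thus ?case unfolding smk_def
    by (simp add: differentiable_mult)
next
  case (Suc n)
  have "smk S n (\<lambda>y. deriv f y * g y)"
    using Suc.IH smk_deriv[OF Suc.prems(1)] smk_mono[OF Suc.prems(2)] by simp
  moreover have "smk S n (\<lambda>y. f y * deriv g y)"
    using Suc.IH smk_deriv[OF Suc.prems(2)] smk_mono[OF Suc.prems(1)] by simp
  ultimately have L: "smk S n (\<lambda>y. 1 * (deriv f y * g y) + 1 * (f y * deriv g y))"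
    using smk_lin[OF assms(1)] by blast
  have E: "\<And>y. y \<in> S \<Longrightarrow> 1 * (deriv f y * g y) + 1 * (f y * deriv g y) = deriv (\<lambda>y. f y * g y) y"
  proof -
    fix y assume y: "y \<in> S"
    have "((\<lambda>y. f y * g y) has_real_derivative deriv f y * g y + f y * deriv g y) (at y)"
      using smk_D[OF Suc.prems(1), of 0 y] smk_D[OF Suc.prems(2), of 0 y] y
      by (auto intro!: derivative_eq_intros)
    hence "deriv (\<lambda>y. f y * g y) y = deriv f y * g y + f y * deriv g y"
      by (rule DERIV_imp_deriv)
    thus "1 * (deriv f y * g y) + 1 * (f y * deriv g y) = deriv (\<lambda>y. f y * g y) y"
      by simp
  qed
  show ?case unfolding smk_def
  proof (intro allI impI ballI)
    fix k x assume k: "k \<le> Suc n" and x: "x \<in> S"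
    show "(deriv ^^ k) (\<lambda>y. f y * g y) differentiable (at x)"
    proof (cases k)
      case 0 thus ?thesis using smk_0[OF Suc.prems(1) x] smk_0[OF Suc.prems(2) x]
        by (simp add: differentiable_mult)
    next
      case (Suc j)
      have "(deriv ^^ j) (\<lambda>y. 1 * (deriv f y * g y) + 1 * (f y * deriv g y)) differentiable (at x)"
        using L k Suc x unfolding smk_def by auto
      moreover have "\<And>y. y \<in> S \<Longrightarrow> (deriv ^^ j) (\<lambda>y. 1 * (deriv f y * g y) + 1 * (f y * deriv g y)) y
          = (deriv ^^ k) (\<lambda>y. f y * g y) y"
        using loc_eq[OF assms(1) E] Suc by (simp add: funpow_Suc_right del: funpow.simps)
      ultimately show ?thesis using loc_diff[OF assms(1) _ x] by blast
    qed
  qed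
qed

lemma smo_lin: "open S \<Longrightarrow> smo S f \<Longrightarrow> smo S g \<Longrightarrow> smo S (\<lambda>y. a * f y + b * g y)"
  unfolding smo_def using smk_lin by blast

lemma smo_mult: "open S \<Longrightarrow> smo S f \<Longrightarrow> smo S g \<Longrightarrow> smo S (\<lambda>y. f y * g y)"
  unfolding smo_def using smk_mult by blast

lemma aux_pow: fixes G A B :: real assumes "G \<noteq> 0"
  shows "(A * G ^ Suc k - B * G ^ k) / (G ^ Suc k * G ^ Suc k) = (A * G - B) / G ^ Suc (Suc k)"
proof -
  have "A * G ^ Suc k - B * G ^ k = G ^ k * (A * G - B)" by (simp add: algebra_simps)
  moreover have "G ^ Suc k * G ^ Suc k = G ^ k * G ^ Suc (Suc k)" by (simp add: algebra_simps)
  ultimately show ?thesis using assms by simp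
qed

lemma quot_deriv:
  fixes f g :: "real \<Rightarrow> real"
  assumes "(f has_real_derivative f') (at y)" "(g has_real_derivative g') (at y)" "g y \<noteq> 0"
  shows "((\<lambda>y. f y / g y ^ m) has_real_derivative (f' * g y - real m * f y * g') / g y ^ Suc m) (at y)"
proof -
  have p: "((\<lambda>y. g y ^ m) has_real_derivative real m * g y ^ (m - 1) * g') (at y)"
    using assms(2) by (auto intro!: derivative_eq_intros)
  have q: "((\<lambda>y. f y / g y ^ m) has_real_derivative
      (f' * g y ^ m - f y * (real m * g y ^ (m - 1) * g')) / (g y ^ m * g y ^ m)) (at y)"
    by (rule DERIV_divide[OF assms(1) p]) (use assms(3) in simp)
  have "(f' * g y ^ m - f y * (real m * g y ^ (m - 1) * g')) / (g y ^ m * g y ^ m)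
     = (f' * g y - real m * f y * g') / g y ^ Suc m"
  proof (cases m)
    case 0 thus ?thesis using assms(3) by simp
  next
    case (Suc k)
    have "(f' * g y ^ m - f y * (real m * g y ^ (m - 1) * g')) / (g y ^ m * g y ^ m)
      = (f' * g y ^ Suc k - (real m * f y * g') * g y ^ k) / (g y ^ Suc k * g y ^ Suc k)"
      using Suc by (simp add: algebra_simps)
    also have "\<dots> = (f' * g y - real m * f y * g') / g y ^ Suc m"
      using aux_pow[OF assms(3)] Suc by simp
    finally show ?thesis .
  qed
  thus ?thesis using q by simp
qed

lemma smk_quot:
  assumes "open S" "smo S f" "smo S g" "\<And>x. x \<in> S \<Longrightarrow> g x \<noteq> 0"
  shows "smk S n (\<lambda>y. f y / g y ^ m)"
  using assms(2)
proof (induction n arbitrary: f m)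
  case 0
  have "\<And>x. x \<in> S \<Longrightarrow> (\<lambda>y. f y / g y ^ m) differentiable (at x)"
  proof -
    fix x assume x: "x \<in> S"
    have "f differentiable (at x)" "g differentiable (at x)"
      using 0 assms(3) x smk_0[of S 0] unfolding smo_def by blast+
    thus "(\<lambda>y. f y / g y ^ m) differentiable (at x)"
      using assms(4)[OF x] by (intro differentiable_divide differentiable_power) auto
  qed
  thus ?case unfolding smk_def by simp
next
  case (Suc n)
  define F where "F = (\<lambda>y. 1 * (deriv f y * g y) + (- real m) * (f y * deriv g y))"
  have sF: "smo S F" unfolding F_def
    using Suc.prems assms smo_deriv by (intro smo_lin smo_mult) auto
  have E: "\<And>y. y \<in> S \<Longrightarrow> F y / g y ^ Suc m = deriv (\<lambda>y. f y / g y ^ m) y"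
  proof -
    fix y assume y: "y \<in> S"
    have d1: "(f has_real_derivative deriv f y) (at y)" "(g has_real_derivative deriv g y) (at y)"
      using Suc.prems assms(3) y smk_D[of S 0 _ 0 y] unfolding smo_def by auto
    have "((\<lambda>y. f y / g y ^ m) has_real_derivative F y / g y ^ Suc m) (at y)"
      using quot_deriv[OF d1 assms(4)[OF y], of m] unfolding F_def by (simp add: algebra_simps)
    hence "deriv (\<lambda>y. f y / g y ^ m) y = F y / g y ^ Suc m" by (rule DERIV_imp_deriv)
    thus "F y / g y ^ Suc m = deriv (\<lambda>y. f y / g y ^ m) y" by simp
  qed
  have L: "smk S n (\<lambda>y. F y / g y ^ Suc m)" using Suc.IH sF by blast
  show ?case unfolding smk_def
  proof (intro allI impI ballI)
    fix k x assume k: "k \<le> Suc n" and x: "x \<in> S"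
    show "(deriv ^^ k) (\<lambda>y. f y / g y ^ m) differentiable (at x)"
    proof (cases k)
      case 0
      have "f differentiable (at x)" "g differentiable (at x)"
        using Suc.prems assms(3) x smk_0[of S 0] unfolding smo_def by blast+
      hence "(\<lambda>y. f y / g y ^ m) differentiable (at x)"
        using assms(4)[OF x] by (intro differentiable_divide differentiable_power) auto
      thus ?thesis using 0 by simp
    next
      case (Suc j)
      have "(deriv ^^ j) (\<lambda>y. F y / g y ^ Suc m) differentiable (at x)"
        using L k Suc x unfolding smk_def by auto
      moreover have "\<And>y. y \<in> S \<Longrightarrow> (deriv ^^ j) (\<lambda>y. F y / g y ^ Suc m) y
          = (deriv ^^ k) (\<lambda>y. f y / g y ^ m) y"
        using loc_eq[OF assms(1) E] Suc by (simp add: funpow_Suc_right del: funpow.simps)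
      ultimately show ?thesis using loc_diff[OF assms(1) _ x] by blast
    qed
  qed
qed

lemma smo_quot: "open S \<Longrightarrow> smo S f \<Longrightarrow> smo S g \<Longrightarrow> (\<And>x. x \<in> S \<Longrightarrow> g x \<noteq> 0) \<Longrightarrow> smo S (\<lambda>y. f y / g y)"
  using smk_quot[of S f g _ 1] unfolding smo_def by simp

lemma seq_deriv:
  assumes "F 0 = f" "\<And>n x. (F n has_real_derivative F (Suc n) x) (at x)"
  shows "(deriv ^^ n) f = F n"
proof (induction n)
  case 0 thus ?case using assms by simp
next
  case (Suc n)
  have "deriv (F n) = F (Suc n)"
    using assms(2) DERIV_imp_deriv by blast
  thus ?case using Suc by simp
qed

lemma seq_smooth:
  assumes "F 0 = f" "\<And>n x. (F n has_real_derivative F (Suc n) x) (at x)"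
  shows "smo S f"
  unfolding smo_def smk_def
  using seq_deriv[OF assms] assms(2) real_differentiable_def by metis

lemma smo_subset: "smo UNIV f \<Longrightarrow> smo S f"
  unfolding smo_def smk_def by blast

lemma smo_affine:
  assumes "smo UNIV f"
  shows "smo UNIV (\<lambda>x. f (a * x + b))"
proof (rule seq_smooth[where F = "\<lambda>n x. a ^ n * (deriv ^^ n) f (a * x + b)"])
  show "(\<lambda>x. a ^ 0 * (deriv ^^ 0) f (a * x + b)) = (\<lambda>x. f (a * x + b))" by simp
  fix n x
  have d: "((deriv ^^ n) f has_real_derivative (deriv ^^ Suc n) f (a * x + b)) (at (a * x + b))"
    using smk_D[of UNIV n f n "a * x + b"] assms unfolding smo_def by simp
  have "((\<lambda>x. a ^ n * (deriv ^^ n) f (a * x + b)) has_real_derivative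
      a ^ n * ((deriv ^^ Suc n) f (a * x + b) * a)) (at x)"
  proof (rule DERIV_cmult)
    have g: "((\<lambda>x. a * x + b) has_real_derivative a) (at x)"
      by (auto intro!: derivative_eq_intros)
    show "((\<lambda>x. (deriv ^^ n) f (a * x + b)) has_real_derivative (deriv ^^ Suc n) f (a * x + b) * a) (at x)"
      using DERIV_chain[OF d g] by (simp add: o_def)
  qed
  thus "((\<lambda>x. a ^ n * (deriv ^^ n) f (a * x + b)) has_real_derivative
      a ^ Suc n * (deriv ^^ Suc n) f (a * x + b)) (at x)"
    by (simp add: algebra_simps)
qed

lemma smo_const: "smo S (\<lambda>x. c)"
  by (rule seq_smooth[where F = "\<lambda>n x. if n = 0 then c else 0"]) (auto intro!: derivative_eq_intros)

lemma smo_id: "smo S (\<lambda>x. x)"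
  by (rule seq_smooth[where F = "\<lambda>n x. if n = 0 then x else if n = 1 then 1 else 0"])
     (auto intro!: derivative_eq_intros)

lemma smo_exp: "smo S (\<lambda>x. exp (c * x))"
  by (rule seq_smooth[where F = "\<lambda>n x. c ^ n * exp (c * x)"]) (auto intro!: derivative_eq_intros)

lemma smo_sinh: "smo S sinh"
  by (rule seq_smooth[where F = "\<lambda>n. if even n then sinh else cosh"]) (auto intro!: derivative_eq_intros)

lemma smo_cosh: "smo S cosh"
  by (rule seq_smooth[where F = "\<lambda>n. if even n then cosh else sinh"]) (auto intro!: derivative_eq_intros)

definition h0 :: "real \<Rightarrow> real" where
  "h0 x = (if 0 < x then exp (- 1 / x) else 0)"

fun Qp :: "nat \<Rightarrow> real poly" where
  "Qp 0 = 1"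
| "Qp (Suc n) = [:0, 0, 1:] * (Qp n - pderiv (Qp n))"

definition Hn :: "nat \<Rightarrow> real \<Rightarrow> real" where
  "Hn n x = (if 0 < x then poly (Qp n) (1 / x) * exp (- 1 / x) else 0)"

lemma polyexp: "((\<lambda>t. poly R t / exp t) \<longlongrightarrow> (0::real)) at_top"
proof -
  have "((\<lambda>t. \<Sum>i\<le>degree R. coeff R i * (t ^ i / exp t)) \<longlongrightarrow> (\<Sum>i\<le>degree R. coeff R i * 0)) at_top"
    by (intro tendsto_sum tendsto_mult tendsto_const tendsto_power_div_exp_0)
  moreover have "\<And>t. (\<Sum>i\<le>degree R. coeff R i * (t ^ i / exp t)) = poly R t / exp t"
    by (simp add: poly_altdef sum_divide_distrib)
  ultimately show ?thesis by simp
qed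

lemma Hn_deriv: "(Hn n has_real_derivative Hn (Suc n) x) (at x)"
proof (cases "0 < x")
  case True
  have ev: "eventually (\<lambda>y. poly (Qp n) (1 / y) * exp (- 1 / y) = Hn n y) (nhds x)"
    using eventually_nhds_in_open[of "{0<..}" x] True
    by (auto elim!: eventually_mono simp: Hn_def)
  have d: "((\<lambda>y. poly (Qp n) (1 / y) * exp (- 1 / y)) has_real_derivative
     poly (pderiv (Qp n)) (1 / x) * (- 1 / x ^ 2) * exp (- 1 / x) + poly (Qp n) (1 / x) * (exp (- 1 / x) * (1 / x ^ 2))) (at x)"
    using True
    by (auto intro!: derivative_eq_intros DERIV_chain2[OF poly_DERIV] simp: power2_eq_square field_simps)
  have "poly (pderiv (Qp n)) (1 / x) * (- 1 / x ^ 2) * exp (- 1 / x) + poly (Qp n) (1 / x) * (exp (- 1 / x) * (1 / x ^ 2))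
      = Hn (Suc n) x"
    using True by (simp add: Hn_def algebra_simps power2_eq_square divide_simps)
  thus ?thesis using d DERIV_cong_ev[OF refl ev refl] by simp
next
  case False
  show ?thesis
  proof (cases "x < 0")
    case True
    have ev: "eventually (\<lambda>y. 0 = Hn n y) (nhds x)"
      using eventually_nhds_in_open[of "{..<0}" x] True
      by (auto elim!: eventually_mono simp: Hn_def)
    have "((\<lambda>y. 0) has_real_derivative 0) (at x)" by simp
    moreover have "Hn (Suc n) x = 0" using True by (simp add: Hn_def)
    ultimately show ?thesis using DERIV_cong_ev[OF refl ev refl] by simp
  next
    case False
    with \<open>\<not> 0 < x\<close> have x0: "x = 0" by simp
    have L: "((\<lambda>y. (Hn n y - Hn n 0) / (y - 0)) \<longlongrightarrow> 0) (at_left 0)"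
    proof (rule tendsto_eventually)
      show "eventually (\<lambda>y. (Hn n y - Hn n 0) / (y - 0) = 0) (at_left 0)"
        unfolding eventually_at_left_field by (auto intro!: exI[of _ "-1"] simp: Hn_def)
    qed
    have G: "((\<lambda>t. poly (pCons 0 (Qp n)) t / exp t) \<longlongrightarrow> 0) at_top" by (rule polyexp)
    have G2: "((\<lambda>y. poly (pCons 0 (Qp n)) (inverse y) / exp (inverse y)) \<longlongrightarrow> 0) (at_right 0)"
      by (rule filterlim_compose[OF G filterlim_inverse_at_top_right])
    have R: "((\<lambda>y. (Hn n y - Hn n 0) / (y - 0)) \<longlongrightarrow> 0) (at_right 0)"
    proof (rule Lim_transform_eventually[OF G2])
      show "eventually (\<lambda>y. poly (pCons 0 (Qp n)) (inverse y) / exp (inverse y) = (Hn n y - Hn n 0) / (y - 0)) (at_right 0)"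
        unfolding eventually_at_right_field
        by (auto intro!: exI[of _ 1] simp: Hn_def exp_minus field_simps)
    qed
    have "((\<lambda>y. (Hn n y - Hn n 0) / (y - 0)) \<longlongrightarrow> 0) (at 0)"
      by (rule filterlim_split_at[OF L R])
    thus ?thesis unfolding has_field_derivative_iff x0 by (simp add: Hn_def)
  qed
qed

lemma smo_h0: "smo S h0"
  apply (rule seq_smooth[where F = Hn])
  subgoal by (auto simp: Hn_def h0_def)
  subgoal by (rule Hn_deriv)
  done

lemma h0_nonneg: "0 \<le> h0 x" by (simp add: h0_def)
lemma h0_pos: "0 < x \<Longrightarrow> 0 < h0 x" by (simp add: h0_def)
lemma h0_zero: "x \<le> 0 \<Longrightarrow> h0 x = 0" by (simp add: h0_def)

definition Dop :: "real \<Rightarrow> (real \<Rightarrow> real) \<Rightarrow> real \<Rightarrow> real" where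
  "Dop m f x = deriv f x - m * f x"

definition sup_in :: "real \<Rightarrow> real \<Rightarrow> (real \<Rightarrow> real) \<Rightarrow> bool" where
  "sup_in a b f \<longleftrightarrow> (\<forall>x. x \<notin> {a..b} \<longrightarrow> f x = 0)"

definition Ip :: "real \<Rightarrow> real \<Rightarrow> (real \<Rightarrow> real) \<Rightarrow> real \<Rightarrow> real" where
  "Ip a b f v = integral {a..b} (\<lambda>x. f x * exp (v * x))"

lemma smo_diff: "smo UNIV f \<Longrightarrow> f differentiable (at x)"
  using smk_0[of UNIV 0 f x] unfolding smo_def by simp

lemma smo_hasd: "smo UNIV f \<Longrightarrow> (f has_real_derivative deriv f x) (at x)"
  using smo_diff DERIV_deriv_iff_real_differentiable by blast

lemma smo_cont: "smo UNIV f \<Longrightarrow> continuous_on S f"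
  by (meson continuous_at_imp_continuous_on differentiable_imp_continuous_within smo_diff)

lemma smo_Dop: "smo UNIV f \<Longrightarrow> smo UNIV (Dop m f)"
proof -
  assume f: "smo UNIV f"
  have "smo UNIV (\<lambda>y. 1 * deriv f y + (- m) * f y)"
    by (rule smo_lin) (use f smo_deriv in auto)
  moreover have "(\<lambda>y. 1 * deriv f y + (- m) * f y) = Dop m f"
    by (auto simp: Dop_def)
  ultimately show ?thesis by simp
qed

lemma sup_Dop:
  assumes "sup_in a b f"
  shows "sup_in a b (Dop m f)"
  unfolding sup_in_def
proof (intro allI impI)
  fix x assume x: "x \<notin> {a..b}"
  have o: "open (- {a..b})" by auto
  have "deriv f x = deriv (\<lambda>y. 0) x"
    using loc_eq[OF o, of f "\<lambda>y. 0" x 1] assms x unfolding sup_in_def by auto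
  thus "Dop m f x = 0" using assms x unfolding sup_in_def Dop_def by simp
qed

lemma sup_end:
  assumes "smo UNIV f" "sup_in a b f" "a \<le> b"
  shows "f a = 0" "f b = 0"
proof -
  have c: "isCont f a" "isCont f b"
    using smo_diff[OF assms(1)] differentiable_imp_continuous_within by blast+
  have "(f \<longlongrightarrow> f a) (at_left a)" using c(1) by (simp add: isCont_def filterlim_at_split)
  moreover have "(f \<longlongrightarrow> 0) (at_left a)"
  proof (rule tendsto_eventually)
    show "eventually (\<lambda>y. f y = 0) (at_left a)"
      unfolding eventually_at_left_field using assms(2) unfolding sup_in_def
      by (auto intro!: exI[of _ "a - 1"])
  qed
  ultimately show "f a = 0" by (metis tendsto_unique trivial_limit_at_left_real)
  have "(f \<longlongrightarrow> f b) (at_right b)" using c(2) by (simp add: isCont_def filterlim_at_split)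
  moreover have "(f \<longlongrightarrow> 0) (at_right b)"
  proof (rule tendsto_eventually)
    show "eventually (\<lambda>y. f y = 0) (at_right b)"
      unfolding eventually_at_right_field using assms(2) unfolding sup_in_def
      by (auto intro!: exI[of _ "b + 1"])
  qed
  ultimately show "f b = 0" by (metis tendsto_unique trivial_limit_at_right_real)
qed

lemma intg_cont: fixes f :: "real \<Rightarrow> real" shows "continuous_on {a..b} f \<Longrightarrow> f integrable_on {a..b}"
  by (rule integrable_continuous_interval)

lemma cont_fe: "smo UNIV f \<Longrightarrow> continuous_on S (\<lambda>x. f x * exp (v * x))"
  by (intro continuous_intros smo_cont)

lemma transp:
  assumes f: "smo UNIV f" and s: "sup_in a b f" and ab: "a \<le> b"
  shows "Ip a b (Dop m f) v = - (v + m) * Ip a b f v"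
proof -
  have fd: "smo UNIV (deriv f)" using f smo_deriv by blast
  have "((\<lambda>x. deriv f x * exp (v * x) + v * (f x * exp (v * x))) has_integral
      (f b * exp (v * b) - f a * exp (v * a))) {a..b}"
  proof (rule fundamental_theorem_of_calculus[OF ab])
    fix x
    have "((\<lambda>x. f x * exp (v * x)) has_real_derivative deriv f x * exp (v * x) + v * (f x * exp (v * x))) (at x)"
      using smo_hasd[OF f, of x] by (auto intro!: derivative_eq_intros simp: algebra_simps)
    thus "((\<lambda>x. f x * exp (v * x)) has_vector_derivative deriv f x * exp (v * x) + v * (f x * exp (v * x))) (at x within {a..b})"
      using has_real_derivative_iff_has_vector_derivative has_vector_derivative_at_within by blast
  qed
  hence I0: "integral {a..b} (\<lambda>x. deriv f x * exp (v * x) + v * (f x * exp (v * x))) = 0"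
    using sup_end[OF f s ab] by (simp add: integral_unique)
  have i1: "(\<lambda>x. deriv f x * exp (v * x)) integrable_on {a..b}"
    by (rule intg_cont, rule cont_fe[OF fd])
  have i2: "(\<lambda>x. f x * exp (v * x)) integrable_on {a..b}"
    by (rule intg_cont, rule cont_fe[OF f])
  have "integral {a..b} (\<lambda>x. deriv f x * exp (v * x) + v * (f x * exp (v * x)))
      = integral {a..b} (\<lambda>x. deriv f x * exp (v * x)) + v * Ip a b f v"
    unfolding Ip_def using integral_add[OF i1 integrable_on_cmult_left[OF i2, of v]] by simp
  hence A: "integral {a..b} (\<lambda>x. deriv f x * exp (v * x)) = - v * Ip a b f v" using I0 by simp
  have "Ip a b (Dop m f) v = integral {a..b} (\<lambda>x. deriv f x * exp (v * x) - m * (f x * exp (v * x)))"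
    unfolding Ip_def Dop_def by (simp add: algebra_simps)
  also have "\<dots> = integral {a..b} (\<lambda>x. deriv f x * exp (v * x)) - m * Ip a b f v"
    unfolding Ip_def using integral_diff[OF i1 integrable_on_cmult_left[OF i2, of m]] by simp
  finally show ?thesis using A by (simp add: algebra_simps)
qed

lemma ode_smooth:
  assumes d: "\<And>x. (p has_real_derivative m * p x + q x) (at x)" and q: "smo UNIV q"
  shows "smo UNIV p"
proof -
  have "\<forall>x. (deriv ^^ n) p differentiable (at x) \<and>
      (deriv ^^ Suc n) p = (\<lambda>x. m * (deriv ^^ n) p x + (deriv ^^ n) q x)" for n
  proof (induction n)
    case 0
    have "deriv p = (\<lambda>x. m * p x + q x)" using d DERIV_imp_deriv by blast
    thus ?case using d real_differentiable_def by auto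
  next
    case (Suc n)
    have qd: "\<And>x. ((deriv ^^ n) q has_real_derivative (deriv ^^ Suc n) q x) (at x)"
      using smk_D[of UNIV n q n] q unfolding smo_def by auto
    have pd: "((deriv ^^ n) p has_real_derivative (deriv ^^ Suc n) p x) (at x)" for x
    proof -
      have "(deriv ^^ n) p differentiable (at x)" using Suc by blast
      hence "((deriv ^^ n) p has_real_derivative deriv ((deriv ^^ n) p) x) (at x)"
        by (simp add: DERIV_deriv_iff_real_differentiable)
      thus ?thesis by simp
    qed
    have D: "\<And>x. ((\<lambda>x. m * (deriv ^^ n) p x + (deriv ^^ n) q x) has_real_derivative
        m * (deriv ^^ Suc n) p x + (deriv ^^ Suc n) q x) (at x)"
      using pd qd by (auto intro!: derivative_eq_intros)
    have "(deriv ^^ Suc (Suc n)) p = deriv (\<lambda>x. m * (deriv ^^ n) p x + (deriv ^^ n) q x)"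
      using Suc by simp
    also have "\<dots> = (\<lambda>x. m * (deriv ^^ Suc n) p x + (deriv ^^ Suc n) q x)"
      using D DERIV_imp_deriv by blast
    finally have e2: "(deriv ^^ Suc (Suc n)) p = (\<lambda>x. m * (deriv ^^ Suc n) p x + (deriv ^^ Suc n) q x)" .
    have "(deriv ^^ Suc n) p differentiable (at x)" for x
    proof -
      have "(deriv ^^ Suc n) p = (\<lambda>x. m * (deriv ^^ n) p x + (deriv ^^ n) q x)" using Suc by blast
      thus ?thesis using D[of x] real_differentiable_def by auto
    qed
    thus ?case using e2 by blast
  qed
  thus ?thesis unfolding smo_def smk_def by blast
qed

lemma int_zero_below:
  assumes "sup_in a b g" "u < a"
  shows "integral {0..u} g = 0"
proof -
  have "integral {0..u} g = integral {0..u} (\<lambda>x. 0)"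
    by (rule integral_cong) (use assms in \<open>auto simp: sup_in_def\<close>)
  thus ?thesis by simp
qed

lemma invert:
  assumes c: "smo UNIV c" and s: "sup_in a b c" and a: "0 < a" "a \<le> b" and o: "Ip a b c (- m) = 0"
  shows "\<exists>p. smo UNIV p \<and> sup_in a b p \<and> Dop m p = c"
proof -
  define g where "g = (\<lambda>x. c x * exp ((- m) * x))"
  have gc: "continuous_on S g" for S unfolding g_def by (rule cont_fe[OF c])
  have gs: "sup_in a b g" using s unfolding sup_in_def g_def by auto
  define P where "P = (\<lambda>x. integral {0..x} g)"
  have Pd: "(P has_real_derivative g x) (at x)" for x
  proof (cases "x < a")
    case True
    have ev: "eventually (\<lambda>y. 0 = P y) (nhds x)"
      using eventually_nhds_in_open[of "{..<a}" x] True int_zero_below[OF gs]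
      by (auto elim!: eventually_mono simp: P_def)
    have "g x = 0" using gs True unfolding sup_in_def by auto
    thus ?thesis using DERIV_cong_ev[OF refl ev refl, of 0] by simp
  next
    case False
    hence x: "x \<in> interior {0..x+1}" using a by auto
    have "(P has_vector_derivative g x) (at x within {0..x+1})"
      unfolding P_def by (rule integral_has_vector_derivative[OF gc]) (use x interior_subset in blast)
    thus ?thesis using at_within_interior[OF x] has_real_derivative_iff_has_vector_derivative by metis
  qed
  define p where "p = (\<lambda>x. exp (m * x) * P x)"
  have pd: "(p has_real_derivative m * p x + c x) (at x)" for x
  proof -
    have "(p has_real_derivative exp (m * x) * m * P x + exp (m * x) * g x) (at x)"
      unfolding p_def using Pd[of x] by (auto intro!: derivative_eq_intros)
    moreover have "exp (m * x) * g x = c x"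
    proof -
      have "exp (m * x) * exp ((- m) * x) = 1" by (simp add: exp_add[symmetric])
      thus ?thesis unfolding g_def by (metis mult.assoc mult.commute mult_1)
    qed
    ultimately show ?thesis unfolding p_def by (simp add: algebra_simps)
  qed
  have sp: "smo UNIV p" by (rule ode_smooth[OF pd c])
  have dp: "Dop m p = c"
  proof
    fix x
    have "deriv p x = m * p x + c x" by (rule DERIV_imp_deriv[OF pd])
    thus "Dop m p x = c x" unfolding Dop_def by simp
  qed
  have supp: "sup_in a b p" unfolding sup_in_def
  proof (intro allI impI)
    fix x assume x: "x \<notin> {a..b}"
    show "p x = 0"
    proof (cases "x < a")
      case True thus ?thesis using int_zero_below[OF gs] by (simp add: p_def P_def)
    next
      case False
      hence xb: "b < x" using x by auto
      have "(g has_integral integral {a..b} g) {a..b}"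
        by (rule integrable_integral, rule intg_cont, rule gc)
      hence "(g has_integral integral {a..b} g) {0..x}"
        by (rule has_integral_on_superset) (use gs xb a in \<open>auto simp: sup_in_def\<close>)
      hence "P x = integral {a..b} g" unfolding P_def by (rule integral_unique)
      also have "\<dots> = 0" using o unfolding Ip_def g_def by simp
      finally show ?thesis by (simp add: p_def)
    qed
  qed
  show ?thesis using sp supp dp by blast
qed

fun DL :: "real list \<Rightarrow> (real \<Rightarrow> real) \<Rightarrow> real \<Rightarrow> real" where
  "DL [] f = f"
| "DL (m # ms) f = Dop m (DL ms f)"

lemma DL_smo: "smo UNIV f \<Longrightarrow> smo UNIV (DL ms f)"
  by (induction ms) (auto intro: smo_Dop)

lemma DL_sup: "sup_in a b f \<Longrightarrow> sup_in a b (DL ms f)"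
  by (induction ms) (auto intro: sup_Dop)

lemma DL_transp:
  assumes "smo UNIV f" "sup_in a b f" "a \<le> b"
  shows "Ip a b (DL ms f) v = (\<Prod>m\<leftarrow>ms. - (v + m)) * Ip a b f v"
proof (induction ms)
  case Nil thus ?case by simp
next
  case (Cons m ms)
  have "Ip a b (DL (m # ms) f) v = - (v + m) * Ip a b (DL ms f) v"
    using transp[OF DL_smo[OF assms(1)] DL_sup[OF assms(2)] assms(3)] by simp
  thus ?case using Cons by simp
qed

lemma DL_invert:
  assumes "distinct ms" "smo UNIV c" "sup_in a b c" "0 < a" "a \<le> b"
    "\<And>m. m \<in> set ms \<Longrightarrow> Ip a b c (- m) = 0"
  shows "\<exists>p. smo UNIV p \<and> sup_in a b p \<and> DL ms p = c"
  using assms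
proof (induction ms arbitrary: c)
  case Nil thus ?case by auto
next
  case (Cons m ms)
  obtain y where y: "smo UNIV y" "sup_in a b y" "Dop m y = c"
    using invert[OF Cons.prems(2,3,4,5)] Cons.prems(6) by auto
  have oy: "Ip a b y (- m') = 0" if "m' \<in> set ms" for m'
  proof -
    have "m' \<noteq> m" using that Cons.prems(1) by auto
    have "Ip a b (Dop m y) (- m') = - (- m' + m) * Ip a b y (- m')"
      by (rule transp[OF y(1,2) \<open>a \<le> b\<close>])
    hence "Ip a b c (- m') = - (- m' + m) * Ip a b y (- m')" using y(3) by simp
    moreover have "Ip a b c (- m') = 0" using Cons.prems(6) that by simp
    ultimately show ?thesis using \<open>m' \<noteq> m\<close> by simp
  qed
  have dms: "distinct ms" using Cons.prems(1) by simp
  obtain p where "smo UNIV p" "sup_in a b p" "DL ms p = y"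
    using Cons.IH[OF dms y(1) y(2) Cons.prems(4) Cons.prems(5) oy] by blast
  hence "smo UNIV p \<and> sup_in a b p \<and> DL (m # ms) p = c" using y(3) by simp
  thus ?case by blast
qed

lemma int_pos:
  fixes f :: "real \<Rightarrow> real"
  assumes c: "continuous_on {a..b} f" and nn: "\<And>x. x \<in> {a..b} \<Longrightarrow> 0 \<le> f x"
    and z: "a < z" "z < b" and p: "0 < f z"
  shows "0 < integral {a..b} f"
proof -
  have "continuous (at z) f" using continuous_on_interior[OF c] z by simp
  hence H: "\<forall>\<epsilon>>0. \<exists>\<delta>>0. \<forall>y. norm (y - z) < \<delta> \<longrightarrow> \<bar>f y - f z\<bar> < \<epsilon>"
    by (simp only: continuous_at_real_range)
  obtain d where d: "0 < d" "\<And>y. norm (y - z) < d \<Longrightarrow> \<bar>f y - f z\<bar> < f z / 2"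
    using H[rule_format, of "f z / 2"] p by auto
  define e where "e = min d (min (z - a) (b - z)) / 2"
  have m: "min d (min (z - a) (b - z)) \<le> d" "min d (min (z - a) (b - z)) \<le> z - a"
    "min d (min (z - a) (b - z)) \<le> b - z" "0 < min d (min (z - a) (b - z))" using d z by auto
  have e: "0 < e" "e < d" "a \<le> z - e" "z + e \<le> b" using m unfolding e_def by linarith+
  have i1: "f integrable_on {z - e..z + e}"
    by (rule intg_cont, rule continuous_on_subset[OF c]) (use e in auto)
  have i2: "f integrable_on {a..b}" by (rule intg_cont[OF c])
  have "integral {z-e..z+e} (\<lambda>x. f z / 2) \<le> integral {z-e..z+e} f"
  proof (rule integral_le)
    show "(\<lambda>x. f z / 2) integrable_on {z - e..z + e}" by (rule intg_cont) (rule continuous_on_const)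
    show "f integrable_on {z - e..z + e}" by (rule i1)
    fix x assume "x \<in> {z - e..z + e}"
    hence "norm (x - z) < d" using e by auto
    thus "f z / 2 \<le> f x" using d(2)[of x] by linarith
  qed
  moreover have "integral {z-e..z+e} f \<le> integral {a..b} f"
    by (rule integral_subset_le[OF _ i1 i2]) (use e nn in auto)
  moreover have "integral {z-e..z+e} (\<lambda>x. f z / 2) = 2 * e * (f z / 2)"
    using e by (simp add: content_real)
  moreover have "0 < 2 * e * (f z / 2)" using e p by simp
  ultimately show ?thesis by linarith
qed

definition bump :: "real \<Rightarrow> real \<Rightarrow> real \<Rightarrow> real" where
  "bump c e y = h0 (y - (c - e)) * h0 ((c + e) - y)"

lemma smo_bump: "smo UNIV (bump c e)"
proof -
  have 1: "smo UNIV (\<lambda>y. h0 (1 * y + (- (c - e))))" by (rule smo_affine[OF smo_h0])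
  have 2: "smo UNIV (\<lambda>y. h0 ((- 1) * y + (c + e)))" by (rule smo_affine[OF smo_h0])
  have "smo UNIV (\<lambda>y. h0 (1 * y + (- (c - e))) * h0 ((- 1) * y + (c + e)))"
    by (rule smo_mult[OF open_UNIV 1 2])
  moreover have "(\<lambda>y. h0 (1 * y + (- (c - e))) * h0 ((- 1) * y + (c + e))) = bump c e"
  proof
    fix y
    have "1 * y + (- (c - e)) = y - (c - e)" "(- 1) * y + (c + e) = (c + e) - y" by simp_all
    thus "h0 (1 * y + (- (c - e))) * h0 ((- 1) * y + (c + e)) = bump c e y"
      unfolding bump_def by (simp only:)
  qed
  ultimately show ?thesis by simp
qed

lemma sup_bump: "sup_in (c - e) (c + e) (bump c e)"
  unfolding sup_in_def bump_def by (auto simp: h0_zero)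

lemma bump_nn: "0 \<le> bump c e y"
  unfolding bump_def by (simp add: h0_nonneg)

lemma bump_pos: "c - e < y \<Longrightarrow> y < c + e \<Longrightarrow> 0 < bump c e y"
  unfolding bump_def by (simp add: h0_pos)

lemma fund_lemma:
  assumes w: "continuous_on {0<..} w"
    and H: "\<And>p a b. smo UNIV p \<Longrightarrow> sup_in a b p \<Longrightarrow> 0 < a \<Longrightarrow> a \<le> b \<Longrightarrow>
              integral {a..b} (\<lambda>x. w x * p x) = 0"
    and x0: "0 < x0"
  shows "w x0 = 0"
proof (rule ccontr)
  assume nz: "w x0 \<noteq> 0"
  define s where "s = sgn (w x0)"
  have s1: "\<bar>s\<bar> = 1" using nz by (simp add: s_def abs_sgn_eq)
  have sw: "s * w x0 = \<bar>w x0\<bar>" unfolding s_def by (simp add: abs_sgn mult.commute)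
  have "continuous (at x0) w" using continuous_on_interior[OF w] x0 by (simp add: interior_open)
  hence Hc: "\<forall>\<epsilon>>0. \<exists>\<delta>>0. \<forall>y. norm (y - x0) < \<delta> \<longrightarrow> \<bar>w y - w x0\<bar> < \<epsilon>"
    by (simp only: continuous_at_real_range)
  obtain d where d: "0 < d" "\<And>y. norm (y - x0) < d \<Longrightarrow> \<bar>w y - w x0\<bar> < \<bar>w x0\<bar>"
    using Hc[rule_format, of "\<bar>w x0\<bar>"] nz by auto
  define e where "e = min d x0 / 2"
  have e: "0 < e" "e < d" "0 < x0 - e" using d x0 unfolding e_def by auto
  have sub: "{x0 - e..x0 + e} \<subseteq> {0<..}" using e by auto
  have pos: "0 < integral {x0-e..x0+e} (\<lambda>y. s * w y * bump x0 e y)"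
  proof (rule int_pos[where z = x0])
    show "continuous_on {x0 - e..x0 + e} (\<lambda>y. s * w y * bump x0 e y)"
      by (intro continuous_intros continuous_on_subset[OF w sub] smo_cont[OF smo_bump])
    fix y assume y: "y \<in> {x0 - e..x0 + e}"
    hence "norm (y - x0) < d" using e by auto
    hence lt: "\<bar>w y - w x0\<bar> < \<bar>w x0\<bar>" using d(2) by blast
    have "s * w y = s * w x0 + s * (w y - w x0)" by (simp add: algebra_simps)
    moreover have "\<bar>s * (w y - w x0)\<bar> = \<bar>w y - w x0\<bar>" using s1 by (simp add: abs_mult)
    ultimately have "0 < s * w y" using sw lt by linarith
    thus "0 \<le> s * w y * bump x0 e y" using bump_nn by simp
  next
    show "x0 - e < x0" "x0 < x0 + e" using e by auto
    show "0 < s * w x0 * bump x0 e x0" using sw nz bump_pos[of x0 e x0] e by simp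
  qed
  have "integral {x0-e..x0+e} (\<lambda>y. w y * bump x0 e y) = 0"
    by (rule H[OF smo_bump sup_bump]) (use e in auto)
  moreover have "integral {x0-e..x0+e} (\<lambda>y. s * w y * bump x0 e y)
      = s * integral {x0-e..x0+e} (\<lambda>y. w y * bump x0 e y)"
    by (simp add: mult.assoc)
  ultimately show False using pos by simp
qed

lemma CV:
  fixes F :: "real \<Rightarrow> real"
  assumes "\<And>x. x \<notin> {a..b} \<Longrightarrow> F x = 0" "continuous_on {a..b} F" "A \<le> a" "b \<le> B"
  shows "integral {A..B} F = integral {a..b} F"
proof -
  have "(F has_integral integral {a..b} F) {a..b}"
    by (rule integrable_integral, rule intg_cont, rule assms(2))
  hence "(F has_integral integral {a..b} F) {A..B}"
  proof (rule has_integral_on_superset)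
    show "\<And>x. x \<notin> {a..b} \<Longrightarrow> F x = 0" by (rule assms(1))
    show "{a..b} \<subseteq> {A..B}" using assms(3,4) by auto
  qed
  thus ?thesis by (rule integral_unique)
qed

lemma sup_mono: "sup_in a b f \<Longrightarrow> A \<le> a \<Longrightarrow> b \<le> B \<Longrightarrow> sup_in A B f"
  unfolding sup_in_def by auto

lemma smo_sum:
  assumes "finite I" "\<And>v. v \<in> I \<Longrightarrow> smo UNIV (F v)"
  shows "smo UNIV (\<lambda>x. \<Sum>v\<in>I. k v * F v x)"
  using assms
proof (induction I rule: finite_induct)
  case empty thus ?case using smo_const[of UNIV 0] by simp
next
  case (insert v I)
  have a: "smo UNIV (\<lambda>x. k v * F v x)"
    by (rule smo_mult[OF open_UNIV smo_const]) (use insert in auto)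
  have b: "smo UNIV (\<lambda>x. \<Sum>v\<in>I. k v * F v x)" using insert by auto
  have "smo UNIV (\<lambda>x. 1 * (k v * F v x) + 1 * (\<Sum>v\<in>I. k v * F v x))"
    by (rule smo_lin[OF open_UNIV a b])
  moreover have "(\<lambda>x. 1 * (k v * F v x) + 1 * (\<Sum>v\<in>I. k v * F v x)) = (\<lambda>x. \<Sum>v\<in>insert v I. k v * F v x)"
    using insert(1,2) by (simp add: sum.insert)
  ultimately show ?case by simp
qed

lemma int_lin:
  fixes F :: "real \<Rightarrow> real"
  assumes "finite I" "F integrable_on S" "\<And>v. v \<in> I \<Longrightarrow> G v integrable_on S"
  shows "integral S (\<lambda>x. F x - (\<Sum>v\<in>I. k v * G v x)) = integral S F - (\<Sum>v\<in>I. k v * integral S (G v))"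
proof -
  have gi: "\<And>v. v \<in> I \<Longrightarrow> (\<lambda>x. k v * G v x) integrable_on S"
    by (rule integrable_on_mult_right, rule assms(3))
  have si: "(\<lambda>x. \<Sum>v\<in>I. k v * G v x) integrable_on S"
    by (rule integrable_sum[OF assms(1)]) (use gi in auto)
  have "integral S (\<lambda>x. F x - (\<Sum>v\<in>I. k v * G v x)) = integral S F - integral S (\<lambda>x. \<Sum>v\<in>I. k v * G v x)"
    by (rule integral_diff[OF assms(2) si])
  also have "integral S (\<lambda>x. \<Sum>v\<in>I. k v * G v x) = (\<Sum>v\<in>I. integral S (\<lambda>x. k v * G v x))"
    by (rule integral_sum[OF assms(1)]) (use gi in auto)
  also have "\<dots> = (\<Sum>v\<in>I. k v * integral S (G v))" by simp
  finally show ?thesis .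
qed

definition NU :: "real set" where "NU = {1/2, -1/2, 3/2, -3/2}"
definition LL :: "real list" where "LL = [1/2, -1/2, 3/2, -3/2]"
definition Mop :: "(real \<Rightarrow> real) \<Rightarrow> real \<Rightarrow> real" where "Mop = DL LL"
definition beta :: "real \<Rightarrow> real" where "beta = bump (3/2) (1/2)"
definition chi :: "real \<Rightarrow> real \<Rightarrow> real" where "chi v = DL (remove1 (- v) LL) beta"

lemma finite_NU: "finite NU" by (simp add: NU_def)
lemma LL_props: "distinct LL" "set LL = NU" by (auto simp: LL_def NU_def)

lemma beta_smo: "smo UNIV beta" unfolding beta_def by (rule smo_bump)
lemma beta_sup: "sup_in 1 2 beta" unfolding beta_def using sup_bump[of "3/2" "1/2"] by simp
lemma chi_smo: "smo UNIV (chi v)" unfolding chi_def by (rule DL_smo[OF beta_smo])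
lemma chi_sup: "sup_in 1 2 (chi v)" unfolding chi_def by (rule DL_sup[OF beta_sup])

lemma beta_Ip: "0 < Ip 1 2 beta v"
  unfolding Ip_def
proof (rule int_pos[where z = "3/2"])
  show "continuous_on {1..2} (\<lambda>x. beta x * exp (v * x))" by (rule cont_fe[OF beta_smo])
  show "\<And>x. x \<in> {1..2} \<Longrightarrow> 0 \<le> beta x * exp (v * x)" using bump_nn by (simp add: beta_def)
  show "0 < beta (3 / 2) * exp (v * (3 / 2))" using bump_pos[of "3/2" "1/2" "3/2"] by (simp add: beta_def)
qed auto

lemma chi_Ip: "Ip 1 2 (chi v) v' = (\<Prod>m\<leftarrow>remove1 (- v) LL. - (v' + m)) * Ip 1 2 beta v'"
  unfolding chi_def by (rule DL_transp[OF beta_smo beta_sup]) simp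

lemma chi_orth: "v \<in> NU \<Longrightarrow> v' \<in> NU \<Longrightarrow> v \<noteq> v' \<Longrightarrow> Ip 1 2 (chi v) v' = 0"
  unfolding chi_Ip by (auto simp: NU_def LL_def)

lemma chi_N: "v \<in> NU \<Longrightarrow> Ip 1 2 (chi v) v \<noteq> 0"
proof -
  assume v: "v \<in> NU"
  have "(\<Prod>m\<leftarrow>remove1 (- v) LL. - (v + m)) \<noteq> 0" using v by (auto simp: NU_def LL_def)
  thus ?thesis using beta_Ip[of v] unfolding chi_Ip by simp
qed

lemma NU_neg: "m \<in> NU \<Longrightarrow> - m \<in> NU" by (auto simp: NU_def)

theorem DBR:
  assumes u: "continuous_on {0<..} u"
    and H: "\<And>p a b. smo UNIV p \<Longrightarrow> sup_in a b p \<Longrightarrow> 0 < a \<Longrightarrow> a \<le> b \<Longrightarrow>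
              integral {a..b} (\<lambda>x. u x * Mop p x) = 0"
  shows "\<exists>C. \<forall>x>0. u x = (\<Sum>v\<in>NU. C v * exp (v * x))"
proof -
  define N where "N v = Ip 1 2 (chi v) v" for v
  define C where "C v = integral {1..2} (\<lambda>x. u x * chi v x) / N v" for v
  define w where "w x = u x - (\<Sum>v\<in>NU. C v * exp (v * x))" for x
  have wc: "continuous_on {0<..} w" unfolding w_def
    by (intro continuous_intros u)
  have uc: "continuous_on {A..B} u" if "0 < A" for A B
    by (rule continuous_on_subset[OF u]) (use that in auto)
  have "w x = 0" if x: "0 < x" for x
  proof (rule fund_lemma[OF wc _ x])
    fix p a b assume p: "smo UNIV p" "sup_in a b p" "0 < a" "a \<le> b"
    define A where "A = min a 1"
    define B where "B = max b 2"
    have AB: "0 < A" "A \<le> a" "b \<le> B" "A \<le> 1" "2 \<le> B" "A \<le> B"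
      using p unfolding A_def B_def by auto
    have sp: "sup_in A B p" by (rule sup_mono[OF p(2) AB(2,3)])
    have sc: "sup_in A B (chi v)" for v by (rule sup_mono[OF chi_sup AB(4,5)])
    define k where "k v = Ip A B p v / N v" for v
    define ch where "ch x = p x - (\<Sum>v\<in>NU. k v * chi v x)" for x
    have ch_smo: "smo UNIV ch"
    proof -
      have "smo UNIV (\<lambda>x. 1 * p x + (- 1) * (\<Sum>v\<in>NU. k v * chi v x))"
        by (rule smo_lin[OF open_UNIV p(1) smo_sum[OF finite_NU chi_smo]])
      thus ?thesis unfolding ch_def by simp
    qed
    have ch_sup: "sup_in A B ch"
      using sp sc unfolding sup_in_def ch_def by simp
    have IpA: "Ip A B (chi v) v' = Ip 1 2 (chi v) v'" for v v'
      unfolding Ip_def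
      by (rule CV) (use chi_sup[of v] AB in \<open>auto simp: sup_in_def intro: cont_fe[OF chi_smo]\<close>)
    have ich: "(\<lambda>x. chi v x * exp (v' * x)) integrable_on {A..B}" for v v'
      by (rule intg_cont, rule cont_fe[OF chi_smo])
    have ip: "(\<lambda>x. p x * exp (v' * x)) integrable_on {A..B}" for v'
      by (rule intg_cont, rule cont_fe[OF p(1)])
    have ch_orth: "Ip A B ch v' = 0" if v': "v' \<in> NU" for v'
    proof -
      have "Ip A B ch v' = integral {A..B} (\<lambda>x. p x * exp (v' * x) - (\<Sum>v\<in>NU. k v * (chi v x * exp (v' * x))))"
        unfolding Ip_def ch_def by (simp add: left_diff_distrib sum_distrib_right mult.assoc)
      also have "\<dots> = Ip A B p v' - (\<Sum>v\<in>NU. k v * Ip A B (chi v) v')"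
        unfolding Ip_def by (rule int_lin[OF finite_NU ip ich])
      also have "(\<Sum>v\<in>NU. k v * Ip A B (chi v) v') = (\<Sum>v\<in>NU. if v = v' then k v * N v else 0)"
        by (rule sum.cong) (auto simp: IpA N_def chi_orth v')
      also have "\<dots> = k v' * N v'" using v' finite_NU by simp
      also have "\<dots> = Ip A B p v'" unfolding k_def N_def using chi_N[OF v'] by simp
      finally show ?thesis by simp
    qed
    obtain q where q: "smo UNIV q" "sup_in A B q" "DL LL q = ch"
      using DL_invert[OF LL_props(1) ch_smo ch_sup AB(1) AB(6)] ch_orth NU_neg LL_props(2) by blast
    have Z: "integral {A..B} (\<lambda>x. u x * ch x) = 0"
      using H[OF q(1) q(2) AB(1) AB(6)] q(3) unfolding Mop_def by simp
    have iuc: "(\<lambda>x. u x * chi v x) integrable_on {A..B}" for v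
      by (rule intg_cont) (intro continuous_intros uc AB(1) smo_cont[OF chi_smo])
    have iup: "(\<lambda>x. u x * p x) integrable_on {A..B}"
      by (rule intg_cont) (intro continuous_intros uc AB(1) smo_cont[OF p(1)])
    have uchi: "integral {A..B} (\<lambda>x. u x * chi v x) = C v * N v" if v: "v \<in> NU" for v
    proof -
      have "integral {A..B} (\<lambda>x. u x * chi v x) = integral {1..2} (\<lambda>x. u x * chi v x)"
        by (rule CV) (use chi_sup[of v] AB in \<open>auto simp: sup_in_def intro!: continuous_intros uc smo_cont[OF chi_smo]\<close>)
      thus ?thesis unfolding C_def using chi_N[OF v] by (simp add: N_def)
    qed
    have "integral {A..B} (\<lambda>x. u x * ch x)
        = integral {A..B} (\<lambda>x. u x * p x - (\<Sum>v\<in>NU. k v * (u x * chi v x)))"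
      unfolding ch_def by (simp add: right_diff_distrib sum_distrib_left mult.left_commute)
    also have "\<dots> = integral {A..B} (\<lambda>x. u x * p x) - (\<Sum>v\<in>NU. k v * integral {A..B} (\<lambda>x. u x * chi v x))"
      by (rule int_lin[OF finite_NU iup iuc])
    also have "(\<Sum>v\<in>NU. k v * integral {A..B} (\<lambda>x. u x * chi v x)) = (\<Sum>v\<in>NU. C v * Ip A B p v)"
      by (rule sum.cong) (auto simp: uchi k_def N_def dest: chi_N)
    finally have E1: "integral {A..B} (\<lambda>x. u x * p x) = (\<Sum>v\<in>NU. C v * Ip A B p v)" using Z by simp
    have "integral {A..B} (\<lambda>x. w x * p x)
        = integral {A..B} (\<lambda>x. u x * p x - (\<Sum>v\<in>NU. C v * (p x * exp (v * x))))"
    proof (rule arg_cong[where f = "integral {A..B}"], rule ext)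
      fix x
      have "(\<Sum>v\<in>NU. C v * exp (v * x)) * p x = (\<Sum>v\<in>NU. C v * (p x * exp (v * x)))"
        unfolding sum_distrib_right by (rule sum.cong) auto
      thus "w x * p x = u x * p x - (\<Sum>v\<in>NU. C v * (p x * exp (v * x)))"
        unfolding w_def by (simp add: left_diff_distrib)
    qed
    also have "\<dots> = integral {A..B} (\<lambda>x. u x * p x) - (\<Sum>v\<in>NU. C v * Ip A B p v)"
      unfolding Ip_def by (rule int_lin[OF finite_NU iup ip])
    finally have E2: "integral {A..B} (\<lambda>x. w x * p x) = 0" using E1 by simp
    have "integral {A..B} (\<lambda>x. w x * p x) = integral {a..b} (\<lambda>x. w x * p x)"
      by (rule CV) (use p AB in \<open>auto simp: sup_in_def intro!: continuous_intros continuous_on_subset[OF wc] smo_cont[OF p(1)]\<close>)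
    thus "integral {a..b} (\<lambda>x. w x * p x) = 0" using E2 by simp
  qed
  thus ?thesis unfolding w_def by auto
qed

lemma deriv_lin_fun:
  assumes "smo UNIV f" "smo UNIV g"
  shows "deriv (\<lambda>x. a * f x + b * g x) = (\<lambda>x. a * deriv f x + b * deriv g x)"
proof
  fix x
  have "((\<lambda>x. a * f x + b * g x) has_real_derivative a * deriv f x + b * deriv g x) (at x)"
    using smo_hasd[OF assms(1), of x] smo_hasd[OF assms(2), of x] by (auto intro!: derivative_eq_intros)
  thus "deriv (\<lambda>x. a * f x + b * g x) x = a * deriv f x + b * deriv g x" by (rule DERIV_imp_deriv)
qed

lemma deriv_mult_fun:
  assumes "smo UNIV f" "smo UNIV g"
  shows "deriv (\<lambda>x. f x * g x) = (\<lambda>x. deriv f x * g x + f x * deriv g x)"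
proof
  fix x
  have "((\<lambda>x. f x * g x) has_real_derivative deriv f x * g x + f x * deriv g x) (at x)"
    using smo_hasd[OF assms(1), of x] smo_hasd[OF assms(2), of x] by (auto intro!: derivative_eq_intros)
  thus "deriv (\<lambda>x. f x * g x) x = deriv f x * g x + f x * deriv g x" by (rule DERIV_imp_deriv)
qed

lemma Dop_eq: "Dop b f = (\<lambda>x. 1 * deriv f x + (- b) * f x)"
  by (auto simp: Dop_def)

lemma Dop2:
  assumes f: "smo UNIV f"
  shows "Dop a (Dop b f) = (\<lambda>x. deriv (deriv f) x - (a + b) * deriv f x + a * b * f x)"
proof -
  have d: "deriv (Dop b f) = (\<lambda>x. 1 * deriv (deriv f) x + (- b) * deriv f x)"
    unfolding Dop_eq[of b f] by (rule deriv_lin_fun[OF smo_deriv[OF f] f])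
  show ?thesis
    by (rule ext) (simp add: Dop_def[of a] d, simp add: Dop_def algebra_simps)
qed

definition d2 :: "(real \<Rightarrow> real) \<Rightarrow> real \<Rightarrow> real" where "d2 f = deriv (deriv f)"
definition d3 :: "(real \<Rightarrow> real) \<Rightarrow> real \<Rightarrow> real" where "d3 f = deriv (deriv (deriv f))"
definition d4 :: "(real \<Rightarrow> real) \<Rightarrow> real \<Rightarrow> real" where "d4 f = deriv (deriv (deriv (deriv f)))"

lemma Mop_formula:
  assumes f: "smo UNIV f"
  shows "Mop f = (\<lambda>x. d4 f x - 5/2 * d2 f x + 9/16 * f x)"
proof -
  define W where "W = (\<lambda>x. 1 * deriv (deriv f) x + (- 9/4) * f x)"
  have W: "Dop (3/2) (Dop (-3/2) f) = W"
    unfolding Dop2[OF f] W_def by (rule ext) simp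
  have f1: "smo UNIV (deriv f)" and f2: "smo UNIV (deriv (deriv f))"
    using f smo_deriv by blast+
  have sW: "smo UNIV W" unfolding W_def by (rule smo_lin[OF open_UNIV f2 f])
  have dW: "deriv W = (\<lambda>x. 1 * deriv (deriv (deriv f)) x + (- 9/4) * deriv f x)"
    unfolding W_def by (rule deriv_lin_fun[OF f2 f])
  have ddW: "deriv (deriv W) = (\<lambda>x. 1 * d4 f x + (- 9/4) * d2 f x)"
    unfolding dW d4_def d2_def by (rule deriv_lin_fun[OF smo_deriv[OF f2] f1])
  have "Mop f = Dop (1/2) (Dop (-1/2) W)"
    unfolding Mop_def LL_def using W by simp
  also have "\<dots> = (\<lambda>x. deriv (deriv W) x - (1/2 + -1/2) * deriv W x + 1/2 * (-1/2) * W x)"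
    by (rule Dop2[OF sW])
  also have "\<dots> = (\<lambda>x. d4 f x - 5/2 * d2 f x + 9/16 * f x)"
    unfolding ddW by (rule ext) (simp add: W_def d2_def algebra_simps)
  finally show ?thesis .
qed

lemma P1_sinh:
  assumes S: "open S" "x \<in> S" and x: "0 < x"
    and fd: "\<And>y. y \<in> S \<Longrightarrow> f differentiable (at y)" and fd2: "deriv f differentiable (at x)"
  shows "P1_rad f x * sinh x = - deriv (deriv (\<lambda>y. f y * sinh y)) x + 1/4 * (f x * sinh x)"
proof -
  have e: "deriv (\<lambda>y. f y * sinh y) y = deriv f y * sinh y + f y * cosh y" if "y \<in> S" for y
  proof -
    have "(f has_real_derivative deriv f y) (at y)"
      using fd[OF that] DERIV_deriv_iff_real_differentiable by blast
    hence "((\<lambda>y. f y * sinh y) has_real_derivative deriv f y * sinh y + f y * cosh y) (at y)"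
      by (auto intro!: derivative_eq_intros)
    thus ?thesis by (rule DERIV_imp_deriv)
  qed
  have "deriv (deriv (\<lambda>y. f y * sinh y)) x = deriv (\<lambda>y. deriv f y * sinh y + f y * cosh y) x"
    by (rule deriv_cong_ev[OF ev_open[OF S] refl]) (rule e)
  also have "\<dots> = deriv (deriv f) x * sinh x + deriv f x * cosh x + (deriv f x * cosh x + f x * sinh x)"
  proof -
    have a: "(f has_real_derivative deriv f x) (at x)"
      using fd[OF S(2)] DERIV_deriv_iff_real_differentiable by blast
    have b: "(deriv f has_real_derivative deriv (deriv f) x) (at x)"
      using fd2 DERIV_deriv_iff_real_differentiable by blast
    have "((\<lambda>y. deriv f y * sinh y + f y * cosh y) has_real_derivative
       deriv (deriv f) x * sinh x + deriv f x * cosh x + (deriv f x * cosh x + f x * sinh x)) (at x)"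
      using a b by (auto intro!: derivative_eq_intros)
    thus ?thesis by (rule DERIV_imp_deriv)
  qed
  finally have E: "deriv (deriv (\<lambda>y. f y * sinh y)) x = deriv (deriv f) x * sinh x + 2 * deriv f x * cosh x + f x * sinh x"
    by simp
  have sx: "sinh x \<noteq> 0" using x by simp
  show ?thesis
    unfolding P1_rad_def hyp_radial_lap_def E using sx by (simp add: field_simps)
qed

lemma P2_Mop:
  assumes psi: "smo UNIV psi" and r: "0 < r"
  shows "P2_rad psi r * sinh r = Mop (\<lambda>x. psi x * sinh x) r"
proof -
  define S where "S = {0::real<..}"
  have oS: "open S" and rS: "r \<in> S" using r by (auto simp: S_def)
  define v where "v = (\<lambda>x. psi x * sinh x)"
  have sv: "smo UNIV v" unfolding v_def by (rule smo_mult[OF open_UNIV psi smo_sinh])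
  have sv1: "smo UNIV (deriv v)" and sv2: "smo UNIV (deriv (deriv v))"
    using sv smo_deriv by blast+
  define F where "F = (\<lambda>r. P1_rad psi r + 2 * psi r)"
  define G where "G = (\<lambda>x. (- 1) * deriv (deriv v) x + 9/4 * v x)"
  have sG: "smo UNIV G" unfolding G_def by (rule smo_lin[OF open_UNIV sv2 sv])
  have FG: "F y * sinh y = G y" if "y \<in> S" for y
  proof -
    have "P1_rad psi y * sinh y = - deriv (deriv v) y + 1/4 * (psi y * sinh y)"
      unfolding v_def
      by (rule P1_sinh[OF open_UNIV UNIV_I]) (use that psi smo_diff smo_deriv in \<open>auto simp: S_def\<close>)
    thus ?thesis unfolding F_def G_def v_def by (simp add: algebra_simps)
  qed
  have FG2: "F y = G y / sinh y" if "y \<in> S" for y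
    using FG[OF that] that by (auto simp: S_def field_simps)
  have sq: "smo S (\<lambda>y. G y / sinh y)"
    by (rule smo_quot[OF oS smo_subset[OF sG] smo_subset[OF smo_sinh]]) (auto simp: S_def)
  have Fdiff: "(deriv ^^ k) F differentiable (at y)" if "y \<in> S" for y k
  proof -
    have "(deriv ^^ k) (\<lambda>y. G y / sinh y) differentiable (at y)"
      using sq that unfolding smo_def smk_def by blast
    moreover have "\<And>z. z \<in> S \<Longrightarrow> (deriv ^^ k) (\<lambda>y. G y / sinh y) z = (deriv ^^ k) F z"
      by (rule loc_eq[OF oS]) (use FG2 in auto)
    ultimately show ?thesis using loc_diff[OF oS _ that] by blast
  qed
  have P: "P1_rad F r * sinh r = - deriv (deriv (\<lambda>y. F y * sinh y)) r + 1/4 * (F r * sinh r)"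
  proof (rule P1_sinh[OF oS rS r])
    show "\<And>y. y \<in> S \<Longrightarrow> F differentiable (at y)" using Fdiff[of _ 0] by simp
    show "deriv F differentiable (at r)" using Fdiff[OF rS, of 1] by simp
  qed
  have dd: "deriv (deriv (\<lambda>y. F y * sinh y)) r = deriv (deriv G) r"
    using loc_eq[OF oS, of "\<lambda>y. F y * sinh y" G r 2] FG rS by (simp add: numeral_2_eq_2)
  have dG: "deriv G = (\<lambda>x. (- 1) * deriv (deriv (deriv v)) x + 9/4 * deriv v x)"
    unfolding G_def by (rule deriv_lin_fun[OF sv2 sv])
  have ddG: "deriv (deriv G) = (\<lambda>x. (- 1) * d4 v x + 9/4 * d2 v x)"
    unfolding dG d4_def d2_def by (rule deriv_lin_fun[OF smo_deriv[OF sv2] sv1])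
  have "P2_rad psi r * sinh r = P1_rad F r * sinh r"
    unfolding P2_rad_def F_def by simp
  also have "\<dots> = d4 v r - 5/2 * d2 v r + 9/16 * v r"
    unfolding P dd ddG using FG[OF rS] unfolding G_def d2_def by (simp add: algebra_simps)
  also have "\<dots> = Mop v r" by (simp add: Mop_formula[OF sv])
  finally show ?thesis unfolding v_def .
qed

lemma smo_refl: "smo UNIV f \<Longrightarrow> smo UNIV (\<lambda>r. f (- r))"
  using smo_affine[of f "-1" 0] by simp

lemma radial_smo: "radial_test psi \<Longrightarrow> smo UNIV psi"
  unfolding radial_test_def smo_def smk_def by blast

lemma psi_test:
  assumes p: "smo UNIV p" "sup_in a b p" "0 < a"
  shows "radial_test (\<lambda>r. (p r - p (- r)) / sinh r)"
proof -
  define psi where "psi = (\<lambda>r. (p r - p (- r)) / sinh r)"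
  have num: "smo UNIV (\<lambda>r. 1 * p r + (- 1) * p (- r))"
    by (rule smo_lin[OF open_UNIV p(1) smo_refl[OF p(1)]])
  define S1 where "S1 = - {0::real}"
  have o1: "open S1" unfolding S1_def by auto
  have q: "smo S1 (\<lambda>r. (1 * p r + (- 1) * p (- r)) / sinh r)"
    by (rule smo_quot[OF o1 smo_subset[OF num] smo_subset[OF smo_sinh]]) (auto simp: S1_def)
  have psi_eq: "(\<lambda>r. (1 * p r + (- 1) * p (- r)) / sinh r) = psi"
    unfolding psi_def by (rule ext) simp
  define S2 where "S2 = {- a<..<a}"
  have o2: "open S2" unfolding S2_def by auto
  have z: "psi y = 0" if "y \<in> S2" for y
    using that p(2,3) unfolding S2_def psi_def sup_in_def by auto
  have diff: "(deriv ^^ n) psi differentiable (at x)" for n x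
  proof (cases "x = 0")
    case False
    hence "x \<in> S1" by (simp add: S1_def)
    thus ?thesis using q unfolding psi_eq smo_def smk_def by blast
  next
    case True
    hence x2: "x \<in> S2" using p(3) by (simp add: S2_def)
    have "(deriv ^^ n) (\<lambda>y. 0) differentiable (at x)"
      using smo_const[of UNIV 0] unfolding smo_def smk_def by blast
    moreover have "\<And>y. y \<in> S2 \<Longrightarrow> (deriv ^^ n) (\<lambda>y. 0) y = (deriv ^^ n) psi y"
      by (rule loc_eq[OF o2]) (use z in auto)
    ultimately show ?thesis using loc_diff[OF o2 _ x2] by blast
  qed
  have even: "psi (- r) = psi r" for r
  proof -
    have "psi (- r) = (- (p r - p (- r))) / (- sinh r)" unfolding psi_def by simp
    also have "\<dots> = psi r" unfolding psi_def by (simp only: divide_minus_left divide_minus_right minus_minus)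
    finally show ?thesis .
  qed
  have supp: "\<forall>r. \<bar>b\<bar> + a < \<bar>r\<bar> \<longrightarrow> psi r = 0"
  proof (intro allI impI)
    fix r assume r: "\<bar>b\<bar> + a < \<bar>r\<bar>"
    have "r \<notin> {a..b}" "- r \<notin> {a..b}" using p(3) r by (auto simp: abs_if split: if_splits)
    hence "p r = 0" "p (- r) = 0" using p(2) unfolding sup_in_def by blast+
    thus "psi r = 0" unfolding psi_def by simp
  qed
  show ?thesis unfolding radial_test_def psi_def[symmetric] using diff even supp by blast
qed

lemma Mop_local:
  assumes f: "smo UNIV f" and g: "smo UNIV g" and S: "open S" "x \<in> S"
    and e: "\<And>y. y \<in> S \<Longrightarrow> f y = g y"
  shows "Mop f x = Mop g x"
proof -
  have "(deriv ^^ k) f x = (deriv ^^ k) g x" for k by (rule loc_eq[OF S(1) e S(2)])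
  from this[of 4] this[of 2] e[OF S(2)] show ?thesis
    unfolding Mop_formula[OF f] Mop_formula[OF g] d4_def d2_def by (simp add: eval_nat_numeral)
qed

lemma DBR_hyp:
  assumes G: "is_P2_green_profile g"
    and p: "smo UNIV p" "sup_in a b p" "0 < a" "a \<le> b"
  shows "integral {a..b} (\<lambda>x. g x * sinh x * Mop p x) = 0"
proof -
  define psi where "psi = (\<lambda>r. (p r - p (- r)) / sinh r)"
  have rt: "radial_test psi" unfolding psi_def by (rule psi_test[OF p(1-3)])
  have spsi: "smo UNIV psi" by (rule radial_smo[OF rt])
  have I: "integral {0<..} (\<lambda>r. g r * P2_rad psi r * (4 * pi * (sinh r)\<^sup>2)) = psi 0"
    using G rt unfolding is_P2_green_profile_def by blast
  have p0: "psi 0 = 0" unfolding psi_def by simp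
  have ptw: "g r * P2_rad psi r * (4 * pi * (sinh r)\<^sup>2) = 4 * pi * (g r * sinh r * Mop p r)" if r: "r \<in> {0<..}" for r
  proof -
    have r0: "0 < r" using r by simp
    have "P2_rad psi r * sinh r = Mop (\<lambda>x. psi x * sinh x) r" by (rule P2_Mop[OF spsi r0])
    also have "\<dots> = Mop p r"
    proof (rule Mop_local[OF smo_mult[OF open_UNIV spsi smo_sinh] p(1) _ r])
      show "open {0::real<..}" by simp
      fix y :: real assume y: "y \<in> {0<..}"
      have "p (- y) = 0" using p(2,3) y unfolding sup_in_def by auto
      thus "psi y * sinh y = p y" using y unfolding psi_def by simp
    qed
    finally have "P2_rad psi r * sinh r = Mop p r" .
    thus ?thesis by (simp add: power2_eq_square algebra_simps)
  qed
  have "integral {0<..} (\<lambda>r. g r * P2_rad psi r * (4 * pi * (sinh r)\<^sup>2))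
      = integral {0<..} (\<lambda>r. 4 * pi * (g r * sinh r * Mop p r))"
    by (rule integral_cong) (rule ptw)
  also have "\<dots> = integral {a..b} (\<lambda>r. 4 * pi * (g r * sinh r * Mop p r))"
  proof -
    have gc: "continuous_on {0<..} g" using G unfolding is_P2_green_profile_def by blast
    have sM: "smo UNIV (Mop p)" unfolding Mop_def by (rule DL_smo[OF p(1)])
    have supM: "sup_in a b (Mop p)" unfolding Mop_def by (rule DL_sup[OF p(2)])
    have "continuous_on {a..b} (\<lambda>r. 4 * pi * (g r * sinh r * Mop p r))"
      by (intro continuous_intros continuous_on_subset[OF gc] smo_cont[OF sM]) (use p in auto)
    hence "((\<lambda>r. 4 * pi * (g r * sinh r * Mop p r)) has_integral integral {a..b} (\<lambda>r. 4 * pi * (g r * sinh r * Mop p r))) {a..b}"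
      by (intro integrable_integral intg_cont)
    hence "((\<lambda>r. 4 * pi * (g r * sinh r * Mop p r)) has_integral integral {a..b} (\<lambda>r. 4 * pi * (g r * sinh r * Mop p r))) {0<..}"
      by (rule has_integral_on_superset) (use supM p in \<open>auto simp: sup_in_def\<close>)
    thus ?thesis by (rule integral_unique)
  qed
  also have "\<dots> = 4 * pi * integral {a..b} (\<lambda>x. g x * sinh x * Mop p x)" by simp
  finally show ?thesis using I p0 by simp
qed

lemma u_form:
  assumes G: "is_P2_green_profile g"
  shows "\<exists>C. \<forall>x>0. g x * sinh x = (\<Sum>v\<in>NU. C v * exp (v * x))"
proof (rule DBR)
  have gc: "continuous_on {0<..} g" using G unfolding is_P2_green_profile_def by blast
  show "continuous_on {0<..} (\<lambda>x. g x * sinh x)" by (intro continuous_intros gc)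
  fix p a b assume "smo UNIV p" "sup_in a b p" "0 < a" "a \<le> b"
  thus "integral {a..b} (\<lambda>x. g x * sinh x * Mop p x) = 0" by (rule DBR_hyp[OF G])
qed

lemma exp_neg_lim:
  assumes k: "0 < (k::real)"
  shows "((\<lambda>r. exp (- (k * r))) \<longlongrightarrow> 0) at_top"
proof -
  have lim: "filterlim (\<lambda>r. k * r) at_top at_top"
    by (rule filterlim_tendsto_pos_mult_at_top[OF tendsto_const k filterlim_ident])
  have "((\<lambda>x. x ^ 0 / exp x) \<longlongrightarrow> (0::real)) at_top" by (rule tendsto_power_div_exp_0)
  hence "((\<lambda>r. (k * r) ^ 0 / exp (k * r)) \<longlongrightarrow> (0::real)) at_top"
    by (rule filterlim_compose[OF _ lim])
  thus ?thesis by (simp add: exp_minus inverse_eq_divide)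
qed

lemma lim0: fixes k a c :: real shows "0 < k - a \<Longrightarrow> ((\<lambda>r. c * exp (- ((k - a) * r))) \<longlongrightarrow> 0) at_top"
  using tendsto_mult_right_zero[OF exp_neg_lim[of "k - a"], of c] by simp

lemma em: fixes a r k :: real shows "exp (a * r) * exp (- (k * r)) = exp (- ((k - a) * r))"
proof -
  have "exp (a * r) * exp (- (k * r)) = exp (a * r + - (k * r))" using exp_add[of "a * r" "- (k * r)"] by simp
  also have "a * r + - (k * r) = - ((k - a) * r)" by (simp add: algebra_simps)
  finally show ?thesis .
qed

lemma no_L2:
  fixes f :: "real \<Rightarrow> real"
  assumes c: "continuous_on {1..} f" and i: "f integrable_on {1..}"
    and nn: "\<And>x. 1 \<le> x \<Longrightarrow> 0 \<le> f x" and e: "0 < e" and N: "\<And>r. N \<le> r \<Longrightarrow> e \<le> f r"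
  shows False
proof -
  define M where "M = max N 1"
  define K where "K = (\<bar>integral {1..} f\<bar> + 1) / e"
  have K: "0 < K" unfolding K_def using e by simp
  have i1: "f integrable_on {M..M+K}"
    by (rule intg_cont, rule continuous_on_subset[OF c]) (auto simp: M_def)
  have "integral {M..M+K} (\<lambda>x. e) \<le> integral {M..M+K} f"
    by (rule integral_le[OF intg_cont[OF continuous_on_const] i1]) (use N in \<open>auto simp: M_def\<close>)
  moreover have "integral {M..M+K} f \<le> integral {1..} f"
    by (rule integral_subset_le[OF _ i1 i]) (use nn in \<open>auto simp: M_def\<close>)
  moreover have "integral {M..M+K} (\<lambda>x. e) = K * e" using K by (simp add: content_real)
  moreover have "K * e = \<bar>integral {1..} f\<bar> + 1" unfolding K_def using e by simp
  ultimately show False by linarith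
qed

lemma growth:
  fixes U :: "real \<Rightarrow> real"
  assumes Uc: "continuous_on UNIV U" and i: "(\<lambda>r. (U r)\<^sup>2) integrable_on {1..}"
    and k: "0 \<le> k" and lim: "((\<lambda>r. U r * exp (- (k * r))) \<longlongrightarrow> c) at_top" and c: "c \<noteq> 0"
  shows False
proof -
  have c2: "0 < \<bar>c\<bar> / 2" using c by simp
  have "eventually (\<lambda>r. dist (U r * exp (- (k * r))) c < \<bar>c\<bar> / 2) at_top"
    using lim[unfolded tendsto_iff, rule_format, OF c2] .
  then obtain N where N: "\<And>r. N \<le> r \<Longrightarrow> \<bar>U r * exp (- (k * r)) - c\<bar> < \<bar>c\<bar> / 2"
    unfolding eventually_at_top_linorder dist_real_def by blast
  show False
  proof (rule no_L2[where f = "\<lambda>r. (U r)\<^sup>2" and e = "c\<^sup>2 / 4" and N = "max N 0"])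
    show "continuous_on {1..} (\<lambda>r. (U r)\<^sup>2)"
      by (intro continuous_intros continuous_on_subset[OF Uc]) auto
    show "(\<lambda>r. (U r)\<^sup>2) integrable_on {1..}" by (rule i)
    show "\<And>x. 1 \<le> x \<Longrightarrow> 0 \<le> (U x)\<^sup>2" by simp
    show "0 < c\<^sup>2 / 4" using c by simp
    fix r assume r: "max N 0 \<le> r"
    define W where "W = U r * exp (- (k * r))"
    have "\<bar>W - c\<bar> < \<bar>c\<bar> / 2" using N r unfolding W_def by auto
    hence W: "\<bar>c\<bar> / 2 \<le> \<bar>W\<bar>" by linarith
    have "U r = W * exp (k * r)" unfolding W_def by (simp add: exp_minus field_simps)
    hence "(U r)\<^sup>2 = W\<^sup>2 * (exp (k * r))\<^sup>2" by (simp add: power_mult_distrib)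
    moreover have "1 \<le> exp (k * r)" using k r by simp
    moreover have "(\<bar>c\<bar> / 2)\<^sup>2 \<le> W\<^sup>2"
      using W by (metis abs_ge_zero abs_power2 power2_abs power_mono zero_le_divide_iff zero_le_numeral)
    ultimately have "(\<bar>c\<bar> / 2)\<^sup>2 * 1 \<le> (U r)\<^sup>2"
      by (metis mult_mono one_le_power power_one zero_le_power2 abs_ge_zero power2_eq_square order_trans)
    thus "c\<^sup>2 / 4 \<le> (U r)\<^sup>2" by (simp add: power_divide)
  qed
qed

lemma kill:
  assumes G: "is_P2_green_profile g" and C: "\<forall>x>0. g x * sinh x = (\<Sum>v\<in>NU. C v * exp (v * x))"
  shows "\<forall>x>0. g x * sinh x = C (- 1/2) * exp (- 1/2 * x) + C (- 3/2) * exp (- 3/2 * x)"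
proof -
  define c1 where "c1 = C (1/2)"
  define c2 where "c2 = C (- 1/2)"
  define c3 where "c3 = C (3/2)"
  define c4 where "c4 = C (- 3/2)"
  define U where "U r = c1 * exp (1/2 * r) + c2 * exp (- 1/2 * r) + c3 * exp (3/2 * r) + c4 * exp (- 3/2 * r)" for r
  have UN: "(\<Sum>v\<in>NU. C v * exp (v * x)) = U x" for x
    unfolding U_def NU_def c1_def c2_def c3_def c4_def by (simp add: algebra_simps)
  have Uc: "continuous_on UNIV U" unfolding U_def by (intro continuous_intros)
  have i0: "(\<lambda>r. (g r)\<^sup>2 * (sinh r)\<^sup>2) integrable_on {1..}"
    using G unfolding is_P2_green_profile_def by blast
  have i: "(\<lambda>r. (U r)\<^sup>2) integrable_on {1..}"
  proof (rule integrable_eq[OF i0])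
    fix x :: real assume "x \<in> {1..}"
    hence "g x * sinh x = U x" using C UN by auto
    thus "(g x)\<^sup>2 * (sinh x)\<^sup>2 = (U x)\<^sup>2" by (metis power_mult_distrib)
  qed
  have prod: "U r * exp (- (k * r)) = c1 * exp (- ((k - 1/2) * r)) + c2 * exp (- ((k - - 1/2) * r))
      + c3 * exp (- ((k - 3/2) * r)) + c4 * exp (- ((k - - 3/2) * r))" for r k
    unfolding U_def by (simp only: distrib_right mult.assoc em)
  have c3z: "c3 = 0"
  proof (rule ccontr)
    assume nz: "c3 \<noteq> 0"
    have "((\<lambda>r. c1 * exp (- ((3/2 - 1/2) * r)) + c2 * exp (- ((3/2 - - 1/2) * r))
      + c3 * exp (- ((3/2 - 3/2) * r)) + c4 * exp (- ((3/2 - - 3/2) * r))) \<longlongrightarrow> 0 + 0 + c3 + 0) at_top"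
      by (intro tendsto_add lim0) auto
    hence L: "((\<lambda>r. U r * exp (- (3/2 * r))) \<longlongrightarrow> c3) at_top" unfolding prod by simp
    show False by (rule growth[OF Uc i _ L nz]) simp
  qed
  have c1z: "c1 = 0"
  proof (rule ccontr)
    assume nz: "c1 \<noteq> 0"
    have "((\<lambda>r. c1 * exp (- ((1/2 - 1/2) * r)) + c2 * exp (- ((1/2 - - 1/2) * r))
      + c3 * exp (- ((1/2 - 3/2) * r)) + c4 * exp (- ((1/2 - - 3/2) * r))) \<longlongrightarrow> c1 + 0 + 0 + 0) at_top"
    proof (intro tendsto_add)
      show "((\<lambda>r. c1 * exp (- ((1/2 - 1/2) * r))) \<longlongrightarrow> c1) at_top" by simp
      show "((\<lambda>r. c2 * exp (- ((1/2 - - 1/2) * r))) \<longlongrightarrow> 0) at_top" by (rule lim0) simp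
      show "((\<lambda>r. c3 * exp (- ((1/2 - 3/2) * r))) \<longlongrightarrow> 0) at_top" by (simp add: c3z)
      show "((\<lambda>r. c4 * exp (- ((1/2 - - 3/2) * r))) \<longlongrightarrow> 0) at_top" by (rule lim0) simp
    qed
    hence L: "((\<lambda>r. U r * exp (- (1/2 * r))) \<longlongrightarrow> c1) at_top" unfolding prod by simp
    show False by (rule growth[OF Uc i _ L nz]) simp
  qed
  show ?thesis
  proof (intro allI impI)
    fix x :: real assume "0 < x"
    hence "g x * sinh x = U x" using C UN by auto
    thus "g x * sinh x = C (- 1/2) * exp (- 1/2 * x) + C (- 3/2) * exp (- 3/2 * x)"
      unfolding U_def using c1z c3z c2_def c4_def by simp
  qed
qed

lemma transp0:
  assumes f: "smo UNIV f" and f1: "f 1 = 0"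
  shows "integral {0..1} (\<lambda>x. Dop m f x * exp (v * x)) = - f 0 - (v + m) * integral {0..1} (\<lambda>x. f x * exp (v * x))"
proof -
  have fd: "smo UNIV (deriv f)" using f smo_deriv by blast
  have "((\<lambda>x. deriv f x * exp (v * x) + v * (f x * exp (v * x))) has_integral
      (f 1 * exp (v * 1) - f 0 * exp (v * 0))) {0..1}"
  proof (rule fundamental_theorem_of_calculus)
    fix x :: real
    have "((\<lambda>x. f x * exp (v * x)) has_real_derivative deriv f x * exp (v * x) + v * (f x * exp (v * x))) (at x)"
      using smo_hasd[OF f, of x] by (auto intro!: derivative_eq_intros simp: algebra_simps)
    thus "((\<lambda>x. f x * exp (v * x)) has_vector_derivative deriv f x * exp (v * x) + v * (f x * exp (v * x))) (at x within {0..1})"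
      using has_real_derivative_iff_has_vector_derivative has_vector_derivative_at_within by blast
  qed simp
  hence I0: "integral {0..1} (\<lambda>x. deriv f x * exp (v * x) + v * (f x * exp (v * x))) = - f 0"
    using f1 by (simp add: integral_unique)
  have i1: "(\<lambda>x. deriv f x * exp (v * x)) integrable_on {0..1}"
    by (rule intg_cont, rule cont_fe[OF fd])
  have i2: "(\<lambda>x. f x * exp (v * x)) integrable_on {0..1}"
    by (rule intg_cont, rule cont_fe[OF f])
  have "integral {0..1} (\<lambda>x. deriv f x * exp (v * x) + v * (f x * exp (v * x)))
      = integral {0..1} (\<lambda>x. deriv f x * exp (v * x)) + v * integral {0..1} (\<lambda>x. f x * exp (v * x))"
    using integral_add[OF i1 integrable_on_cmult_left[OF i2, of v]] by simp
  hence A: "integral {0..1} (\<lambda>x. deriv f x * exp (v * x)) = - f 0 - v * integral {0..1} (\<lambda>x. f x * exp (v * x))"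
    using I0 by simp
  have "integral {0..1} (\<lambda>x. Dop m f x * exp (v * x)) = integral {0..1} (\<lambda>x. deriv f x * exp (v * x) - m * (f x * exp (v * x)))"
    unfolding Dop_def by (simp add: algebra_simps)
  also have "\<dots> = integral {0..1} (\<lambda>x. deriv f x * exp (v * x)) - m * integral {0..1} (\<lambda>x. f x * exp (v * x))"
    using integral_diff[OF i1 integrable_on_cmult_left[OF i2, of m]] by simp
  finally show ?thesis using A by (simp add: algebra_simps)
qed

lemma even_d0:
  assumes e: "\<And>r. f (- r) = f r" and d: "f differentiable (at 0)"
  shows "deriv f 0 = (0::real)"
proof -
  have D: "(f has_real_derivative deriv f 0) (at 0)" using d DERIV_deriv_iff_real_differentiable by blast
  have D': "(f has_real_derivative deriv f 0) (at (- 0))" using D by simp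
  have g: "((\<lambda>r::real. - r) has_real_derivative - 1) (at 0)" by (auto intro!: derivative_eq_intros)
  have "((\<lambda>r. f (- r)) has_real_derivative deriv f 0 * (- 1)) (at 0)"
    using DERIV_chain2[OF D' g] by simp
  hence "(f has_real_derivative - deriv f 0) (at 0)" using e by simp
  with D have "deriv f 0 = - deriv f 0" by (rule DERIV_unique)
  thus ?thesis by simp
qed

lemma deriv_sinh_fun: "deriv sinh = cosh"
  by (rule ext, rule DERIV_imp_deriv) (auto intro!: derivative_eq_intros)

lemma deriv_cosh_fun: "deriv cosh = sinh"
  by (rule ext, rule DERIV_imp_deriv) (auto intro!: derivative_eq_intros)

lemma v_derivs:
  assumes psi: "smo UNIV psi"
  defines "v \<equiv> (\<lambda>x. psi x * sinh x)"
  shows "v 0 = 0" "deriv v 0 = psi 0" "deriv (deriv v) 0 = 2 * deriv psi 0"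
    "deriv (deriv (deriv v)) 0 = 3 * deriv (deriv psi) 0 + psi 0"
proof -
  have p1: "smo UNIV (deriv psi)" and p2: "smo UNIV (deriv (deriv psi))"
    using psi smo_deriv by blast+
  have dv: "deriv v = (\<lambda>x. deriv psi x * sinh x + psi x * cosh x)"
    unfolding v_def deriv_mult_fun[OF psi smo_sinh] deriv_sinh_fun ..
  have ddv: "deriv (deriv v) = (\<lambda>x. deriv (deriv psi) x * sinh x + 2 * (deriv psi x * cosh x) + psi x * sinh x)"
  proof (rule ext, rule DERIV_imp_deriv)
    fix x
    show "(deriv v has_real_derivative deriv (deriv psi) x * sinh x + 2 * (deriv psi x * cosh x) + psi x * sinh x) (at x)"
      unfolding dv using smo_hasd[OF psi, of x] smo_hasd[OF p1, of x]
      by (auto intro!: derivative_eq_intros simp: algebra_simps)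
  qed
  have "(deriv (deriv v) has_real_derivative 3 * deriv (deriv psi) 0 + psi 0) (at 0)"
    unfolding ddv using smo_hasd[OF psi, of 0] smo_hasd[OF p1, of 0] smo_hasd[OF p2, of 0]
    by (auto intro!: derivative_eq_intros)
  thus "deriv (deriv (deriv v)) 0 = 3 * deriv (deriv psi) 0 + psi 0" by (rule DERIV_imp_deriv)
  show "v 0 = 0" unfolding v_def by simp
  show "deriv v 0 = psi 0" unfolding dv by simp
  show "deriv (deriv v) 0 = 2 * deriv psi 0" unfolding ddv by simp
qed

lemma chain_values:
  assumes v: "smo UNIV v" and s: "sup_in (-1) 1 v"
  shows "integral {0..1} (\<lambda>x. Mop v x * exp ((- 1/2) * x)) =
           - (deriv (deriv (deriv v)) 0 - 9/4 * deriv v 0 + 1/2 * (deriv (deriv v) 0 - 9/4 * v 0))"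
    "integral {0..1} (\<lambda>x. Mop v x * exp ((- 3/2) * x)) =
           - (deriv (deriv (deriv v)) 0 - 9/4 * deriv v 0 + 1/2 * (deriv (deriv v) 0 - 9/4 * v 0))
           - (deriv (deriv v) 0 - 9/4 * v 0) - 2 * (deriv v 0 + 3/2 * v 0)"
proof -
  define v3 where "v3 = Dop (- 3/2) v"
  define v2 where "v2 = Dop (3/2) v3"
  define v1 where "v1 = Dop (- 1/2) v2"
  have M: "Mop v = Dop (1/2) v1" unfolding Mop_def LL_def v1_def v2_def v3_def by simp
  have s3: "smo UNIV v3" "sup_in (-1) 1 v3" unfolding v3_def using v s by (auto intro: smo_Dop sup_Dop)
  have s2: "smo UNIV v2" "sup_in (-1) 1 v2" unfolding v2_def using s3 by (auto intro: smo_Dop sup_Dop)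
  have s1: "smo UNIV v1" "sup_in (-1) 1 v1" unfolding v1_def using s2 by (auto intro: smo_Dop sup_Dop)
  have z1: "v1 1 = 0" using sup_end[OF s1] by simp
  have z2: "v2 1 = 0" using sup_end[OF s2] by simp
  have z3: "v3 1 = 0" using sup_end[OF s3] by simp
  have v2eq: "v2 = (\<lambda>x. deriv (deriv v) x - 0 * deriv v x + (- 9/4) * v x)"
    unfolding v2_def v3_def Dop2[OF v] by (rule ext) simp
  have v1_0: "v1 0 = deriv (deriv (deriv v)) 0 - 9/4 * deriv v 0 + 1/2 * (deriv (deriv v) 0 - 9/4 * v 0)"
  proof -
    have "deriv v2 = (\<lambda>x. 1 * deriv (deriv (deriv v)) x + (- 9/4) * deriv v x)"
    proof -
      have e: "v2 = (\<lambda>x. 1 * deriv (deriv v) x + (- 9/4) * v x)"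
        unfolding v2_def v3_def Dop2[OF v] by (rule ext) simp
      show ?thesis unfolding e by (rule deriv_lin_fun[OF smo_deriv[OF smo_deriv[OF v]] v])
    qed
    thus ?thesis unfolding v1_def Dop_def v2eq by simp
  qed
  have v2_0: "v2 0 = deriv (deriv v) 0 - 9/4 * v 0" unfolding v2eq by simp
  have v3_0: "v3 0 = deriv v 0 + 3/2 * v 0" unfolding v3_def Dop_def by simp
  show "integral {0..1} (\<lambda>x. Mop v x * exp ((- 1/2) * x)) =
           - (deriv (deriv (deriv v)) 0 - 9/4 * deriv v 0 + 1/2 * (deriv (deriv v) 0 - 9/4 * v 0))"
    unfolding M transp0[OF s1(1) z1] v1_0 by simp
  have A: "integral {0..1} (\<lambda>x. Mop v x * exp ((- 3/2) * x)) = - v1 0 + integral {0..1} (\<lambda>x. v1 x * exp ((- 3/2) * x))"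
    unfolding M transp0[OF s1(1) z1] by simp
  have B: "integral {0..1} (\<lambda>x. v1 x * exp ((- 3/2) * x)) = - v2 0 + 2 * integral {0..1} (\<lambda>x. v2 x * exp ((- 3/2) * x))"
    unfolding v1_def transp0[OF s2(1) z2] by simp
  have C: "integral {0..1} (\<lambda>x. v2 x * exp ((- 3/2) * x)) = - v3 0"
    unfolding v2_def transp0[OF s3(1) z3] by simp
  show "integral {0..1} (\<lambda>x. Mop v x * exp ((- 3/2) * x)) =
           - (deriv (deriv (deriv v)) 0 - 9/4 * deriv v 0 + 1/2 * (deriv (deriv v) 0 - 9/4 * v 0))
           - (deriv (deriv v) 0 - 9/4 * v 0) - 2 * (deriv v 0 + 3/2 * v 0)"
    unfolding A B C v1_0 v2_0 v3_0 by simp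
qed

lemma BND:
  assumes G: "is_P2_green_profile g"
    and U: "\<forall>x>0. g x * sinh x = a * exp (- 1/2 * x) + b * exp (- 3/2 * x)"
    and rt: "radial_test psi" and s: "sup_in (-1) 1 psi"
  shows "4 * pi * (a * (- 3 * deriv (deriv psi) 0 + 5/4 * psi 0) + b * (- 3 * deriv (deriv psi) 0 - 3/4 * psi 0)) = psi 0"
proof -
  have sp: "smo UNIV psi" by (rule radial_smo[OF rt])
  have ev: "\<And>r. psi (- r) = psi r" using rt unfolding radial_test_def by blast
  have d0: "deriv psi 0 = 0" by (rule even_d0[OF ev smo_diff[OF sp]])
  define v where "v = (\<lambda>x. psi x * sinh x)"
  have sv: "smo UNIV v" unfolding v_def by (rule smo_mult[OF open_UNIV sp smo_sinh])
  have svs: "sup_in (-1) 1 v" using s unfolding v_def sup_in_def by simp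
  have sM: "smo UNIV (Mop v)" unfolding Mop_def by (rule DL_smo[OF sv])
  have supM: "sup_in (-1) 1 (Mop v)" unfolding Mop_def by (rule DL_sup[OF svs])
  have I: "integral {0<..} (\<lambda>r. g r * P2_rad psi r * (4 * pi * (sinh r)\<^sup>2)) = psi 0"
    using G rt unfolding is_P2_green_profile_def by blast
  define H where "H r = 4 * pi * (a * (Mop v r * exp ((- 1/2) * r)) + b * (Mop v r * exp ((- 3/2) * r)))" for r
  have ptw: "g r * P2_rad psi r * (4 * pi * (sinh r)\<^sup>2) = H r" if r: "r \<in> {0<..}" for r
  proof -
    have r0: "0 < r" using r by simp
    have P: "P2_rad psi r * sinh r = Mop v r" unfolding v_def by (rule P2_Mop[OF sp r0])
    have "g r * P2_rad psi r * (4 * pi * (sinh r)\<^sup>2) = 4 * pi * (g r * sinh r) * (P2_rad psi r * sinh r)"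
      by (simp add: power2_eq_square algebra_simps)
    also have "\<dots> = 4 * pi * (a * exp (- 1/2 * r) + b * exp (- 3/2 * r)) * Mop v r"
      using U r0 P by simp
    also have "\<dots> = H r" unfolding H_def by (simp add: algebra_simps)
    finally show ?thesis .
  qed
  have H1: "H x = 0" if "1 < x" for x
    using supM that unfolding sup_in_def H_def by simp
  have "integral {0<..} (\<lambda>r. g r * P2_rad psi r * (4 * pi * (sinh r)\<^sup>2)) = integral {0<..} H"
    by (rule integral_cong) (rule ptw)
  also have "\<dots> = integral {0..1} H"
  proof -
    have "integral UNIV (\<lambda>x. if x \<in> {0<..} then H x else 0) = integral UNIV (\<lambda>x. if x \<in> {0..1} then H x else 0)"
      by (rule integral_spike[of "{0}"]) (use H1 in auto)
    thus ?thesis by (simp only: integral_restrict_UNIV)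
  qed
  also have "\<dots> = 4 * pi * (a * integral {0..1} (\<lambda>x. Mop v x * exp ((- 1/2) * x))
       + b * integral {0..1} (\<lambda>x. Mop v x * exp ((- 3/2) * x)))"
  proof -
    have i1: "(\<lambda>x. a * (Mop v x * exp ((- 1/2) * x))) integrable_on {0..1}"
      by (rule intg_cont) (intro continuous_intros cont_fe[OF sM] smo_cont[OF sM])
    have i2: "(\<lambda>x. b * (Mop v x * exp ((- 3/2) * x))) integrable_on {0..1}"
      by (rule intg_cont) (intro continuous_intros cont_fe[OF sM] smo_cont[OF sM])
    have "integral {0..1} H = 4 * pi * integral {0..1} (\<lambda>x. a * (Mop v x * exp ((- 1/2) * x)) + b * (Mop v x * exp ((- 3/2) * x)))"
      unfolding H_def by simp
    also have "\<dots> = 4 * pi * (integral {0..1} (\<lambda>x. a * (Mop v x * exp ((- 1/2) * x))) + integral {0..1} (\<lambda>x. b * (Mop v x * exp ((- 3/2) * x))))"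
      by (simp only: integral_add[OF i1 i2])
    finally show ?thesis by simp
  qed
  finally have E: "4 * pi * (a * integral {0..1} (\<lambda>x. Mop v x * exp ((- 1/2) * x))
       + b * integral {0..1} (\<lambda>x. Mop v x * exp ((- 3/2) * x))) = psi 0" using I by simp
  note cv = chain_values[OF sv svs]
  note vd = v_derivs[OF sp, folded v_def]
  have v0: "v 0 = 0" unfolding v_def by simp
  show ?thesis using E unfolding cv vd d0 v0 by (simp add: algebra_simps)
qed

lemma exp_pair: fixes a b x :: real shows "exp (a * x) * exp (b * x) = exp ((a + b) * x)"
  by (simp add: exp_add[symmetric] algebra_simps)

theorem closed_form:
  assumes G: "is_P2_green_profile g"
  shows "\<forall>x>0. g x = 1 / (4 * pi * (exp (3/2 * x) + exp (1/2 * x)))"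
proof -
  obtain C where C: "\<forall>x>0. g x * sinh x = (\<Sum>v\<in>NU. C v * exp (v * x))"
    using u_form[OF G] by blast
  define a where "a = C (- 1/2)"
  define b where "b = C (- 3/2)"
  have U: "\<forall>x>0. g x * sinh x = a * exp (- 1/2 * x) + b * exp (- 3/2 * x)"
    using kill[OF G C] unfolding a_def b_def .
  define A where "A = bump 0 1"
  have sA: "smo UNIV A" unfolding A_def by (rule smo_bump)
  have supA: "sup_in (-1) 1 A" unfolding A_def using sup_bump[of 0 1] by simp
  have evA: "A (- r) = A r" for r unfolding A_def bump_def by (simp add: algebra_simps)
  have A0: "0 < A 0" unfolding A_def using bump_pos[of 0 1 0] by simp
  have rtA: "radial_test A"
    unfolding radial_test_def using sA evA supA unfolding smo_def smk_def sup_in_def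
    by (auto intro!: exI[of _ 1] simp: abs_if split: if_splits)
  define B where "B r = r * r * A r" for r
  have sB: "smo UNIV B" unfolding B_def[abs_def]
    by (intro smo_mult[OF open_UNIV] smo_id sA)
  have supB: "sup_in (-1) 1 B" using supA unfolding B_def sup_in_def by simp
  have evB: "B (- r) = B r" for r unfolding B_def using evA by simp
  have rtB: "radial_test B"
    unfolding radial_test_def using sB evB supB unfolding smo_def smk_def sup_in_def
    by (auto intro!: exI[of _ 1] simp: abs_if split: if_splits)
  have B0: "B 0 = 0" unfolding B_def by simp
  have sA1: "smo UNIV (deriv A)" using sA smo_deriv by blast
  have dB: "deriv B = (\<lambda>x. 2 * x * A x + x * x * deriv A x)"
  proof (rule ext, rule DERIV_imp_deriv)
    fix x show "(B has_real_derivative 2 * x * A x + x * x * deriv A x) (at x)"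
      unfolding B_def[abs_def] using smo_hasd[OF sA, of x] by (auto intro!: derivative_eq_intros simp: algebra_simps)
  qed
  have "(deriv B has_real_derivative 2 * A 0) (at 0)"
    unfolding dB using smo_hasd[OF sA, of 0] smo_hasd[OF sA1, of 0]
    by (auto intro!: derivative_eq_intros)
  hence ddB: "deriv (deriv B) 0 = 2 * A 0" by (rule DERIV_imp_deriv)
  have EB: "4 * pi * (a * (- 3 * (2 * A 0) + 5/4 * 0) + b * (- 3 * (2 * A 0) - 3/4 * 0)) = 0"
    using BND[OF G U rtB supB] unfolding ddB B0 .
  hence "(pi * A 0) * (a + b) = 0" by (simp add: algebra_simps)
  hence ab: "b = - a" using A0 pi_gt_zero by simp
  have EA: "4 * pi * (a * (- 3 * deriv (deriv A) 0 + 5/4 * A 0) + b * (- 3 * deriv (deriv A) 0 - 3/4 * A 0)) = A 0"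
    by (rule BND[OF G U rtA supA])
  hence "8 * pi * a * A 0 = A 0" unfolding ab by (simp add: algebra_simps)
  hence a: "a = 1 / (8 * pi)" using A0 by (simp add: field_simps)
  show ?thesis
  proof (intro allI impI)
    fix x :: real assume x: "0 < x"
    have sx: "0 < sinh x" using x by simp
    have gx: "g x * sinh x = (exp (- 1/2 * x) - exp (- 3/2 * x)) / (8 * pi)"
      using U x unfolding ab a by (simp add: field_simps)
    have D: "0 < 4 * pi * (exp (3/2 * x) + exp (1/2 * x))" by (simp add: add_pos_pos)
    have key: "(exp (- 1/2 * x) - exp (- 3/2 * x)) * (4 * pi * (exp (3/2 * x) + exp (1/2 * x)))
        = 8 * pi * sinh x"
    proof -
      have "(exp (- 1/2 * x) - exp (- 3/2 * x)) * (exp (3/2 * x) + exp (1/2 * x))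
          = exp (- 1/2 * x) * exp (3/2 * x) + exp (- 1/2 * x) * exp (1/2 * x)
            - exp (- 3/2 * x) * exp (3/2 * x) - exp (- 3/2 * x) * exp (1/2 * x)"
        by (simp add: algebra_simps)
      also have "\<dots> = exp x - exp (- x)"
        unfolding exp_pair by simp
      also have "\<dots> = 2 * sinh x" by (simp add: sinh_def)
      finally have K: "(exp (- 1/2 * x) - exp (- 3/2 * x)) * (exp (3/2 * x) + exp (1/2 * x)) = 2 * sinh x" .
      have "(exp (- 1/2 * x) - exp (- 3/2 * x)) * (4 * pi * (exp (3/2 * x) + exp (1/2 * x)))
        = 4 * pi * ((exp (- 1/2 * x) - exp (- 3/2 * x)) * (exp (3/2 * x) + exp (1/2 * x)))"
        by (simp only: mult_ac)
      also have "\<dots> = 4 * pi * (2 * sinh x)" by (simp only: K)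
      finally show ?thesis by simp
    qed
    have "g x = (exp (- 1/2 * x) - exp (- 3/2 * x)) / (8 * pi * sinh x)"
      using gx sx by (simp add: field_simps)
    also have "\<dots> = 1 / (4 * pi * (exp (3/2 * x) + exp (1/2 * x)))"
      using key sx D by (simp add: field_simps)
    finally show "g x = 1 / (4 * pi * (exp (3/2 * x) + exp (1/2 * x)))" .
  qed
qed

theorem mainTheorem4:
  fixes g :: "real \<Rightarrow> real"
  assumes "is_P2_green_profile g"
  shows "(\<forall>r>0. g r > 0) \<and> (\<forall>r s. 0 < r \<longrightarrow> r < s \<longrightarrow> g s < g r)"
proof -
  have cf: "\<forall>x>0. g x = 1 / (4 * pi * (exp (3/2 * x) + exp (1/2 * x)))"
    by (rule closed_form[OF assms])
  have P: "\<forall>r>0. g r > 0"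
  proof (intro allI impI)
    fix r :: real assume r: "0 < r"
    have "0 < 4 * pi * (exp (3/2 * r) + exp (1/2 * r))" by (simp add: add_pos_pos)
    thus "0 < g r" using cf r by simp
  qed
  have M: "\<forall>r s. 0 < r \<longrightarrow> r < s \<longrightarrow> g s < g r"
  proof (intro allI impI)
    fix r s :: real assume r: "0 < r" and rs: "r < s"
    have A: "0 < 4 * pi * (exp (3/2 * r) + exp (1/2 * r))" by (simp add: add_pos_pos)
    have e1: "exp (3/2 * r) < exp (3/2 * s)" and e2: "exp (1/2 * r) < exp (1/2 * s)" using rs by simp_all
    have "exp (3/2 * r) + exp (1/2 * r) < exp (3/2 * s) + exp (1/2 * s)"
      by (rule add_strict_mono[OF e1 e2])
    hence B: "4 * pi * (exp (3/2 * r) + exp (1/2 * r)) < 4 * pi * (exp (3/2 * s) + exp (1/2 * s))"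
      by simp
    have "1 / (4 * pi * (exp (3/2 * s) + exp (1/2 * s))) < 1 / (4 * pi * (exp (3/2 * r) + exp (1/2 * r)))"
    proof -
      have AB: "0 < (4 * pi * (exp (3/2 * s) + exp (1/2 * s))) * (4 * pi * (exp (3/2 * r) + exp (1/2 * r)))"
        by (intro mult_pos_pos add_pos_pos) auto
      show ?thesis by (rule divide_strict_left_mono[OF B _ AB]) simp
    qed
    thus "g s < g r" using cf r rs by simp
  qed
  show ?thesis using P M by blast
qed

end
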